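(* Let $p$ be a prime and $e > 0$. The distinct elementary divisors of $A_{p^e}$ are $p^i$ for $0 \le i \le e$, and the multiplicity of $p^i$ among the elementary divisors is $\phi(p^{e-i})$.
   Context: For a positive integer $k$, let $\Phi_d$ denote the $d$th cyclotomic polynomial and let $\Psi_k : \mathbf{Z}[X]/(X^k-1) \to \bigoplus_{d \mid k} \mathbf{Z}[X]/(\Phi_d(X))$ be the natural map $f \bmod (X^k-1) \mapsto \bigoplus_{d\mid k} f \bmod \Phi_d(X)$. Endow $\mathbf{Z}[X]/(X^k-1)$ with the basis $(1, \overline{X}, \dots, \overline{X}^{k-1})$, each $\mathbf{Z}[X]/(\Phi_d(X))$ with the basis $(1, \overline{X}, \dots, \overline{X}^{\phi(d)-1})$, and order the summands by increasing $d$. $A_k$ is the $k\times k$ integer matrix of $\Psi_k$ with respect to these bases. Elementary divisors are those of the Smith normal form over $\mathbf{Z}$, taken non-negative; $\phi$ is Euler's totient function. *)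

theory Defs
  imports Complex_Main "HOL-Computational_Algebra.Polynomial" "HOL-Number_Theory.Totient"
    "HOL-Library.Multiset" "Jordan_Normal_Form.Matrix"
begin

definition cyclo :: "nat \<Rightarrow> int poly" where
  "cyclo d = (THE q. map_poly of_int q =
      (\<Prod>k\<in>{k. k < d \<and> coprime k d}. [:- cis (2 * pi * real k / real d), 1:] :: complex poly))"

(* Remainder of f modulo the monic polynomial g in Z[X]. Since g is monic
   (lead coefficient 1), the pseudo-remainder is exactly the Euclidean remainder. *)
definition red_mod :: "int poly \<Rightarrow> int poly \<Rightarrow> int poly" where
  "red_mod f g = pseudo_mod f g"

definition blk_off :: "nat \<Rightarrow> nat \<Rightarrow> nat" where
  "blk_off k d = (\<Sum>d'\<in>{d'. d' dvd k \<and> d' < d}. totient d')"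

definition blk_of :: "nat \<Rightarrow> nat \<Rightarrow> nat" where
  "blk_of k r = (THE d. d dvd k \<and> blk_off k d \<le> r \<and> r < blk_off k d + totient d)"

(* The k x k matrix A_k of Psi_k: column j is the image of X^j; the rows of the
   d-block (d | k, ordered by increasing d) are the coefficients of
   X^j mod Phi_d with respect to 1, X, ..., X^(phi(d)-1). *)
definition A_mat :: "nat \<Rightarrow> int mat" where
  "A_mat k = mat k k (\<lambda>(r, j). let d = blk_of k r in
      coeff (red_mod (monom 1 j) (cyclo d)) (r - blk_off k d))"

definition smith_nf :: "int mat \<Rightarrow> int mat \<Rightarrow> bool" where
  "smith_nf M D \<longleftrightarrow> (\<exists>P Q. P \<in> carrier_mat (dim_row M) (dim_row M) \<and>
       Q \<in> carrier_mat (dim_col M) (dim_col M) \<and>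
       invertible_mat P \<and> invertible_mat Q \<and> D = P * M * Q) \<and>
     (\<forall>i j. i < dim_row D \<and> j < dim_col D \<and> i \<noteq> j \<longrightarrow> D $$ (i, j) = 0) \<and>
     (\<forall>i. i < min (dim_row D) (dim_col D) \<longrightarrow> D $$ (i, i) \<ge> 0) \<and>
     (\<forall>i. i + 1 < min (dim_row D) (dim_col D) \<longrightarrow> D $$ (i, i) dvd D $$ (i + 1, i + 1))"

definition elem_divs :: "int mat \<Rightarrow> int multiset" where
  "elem_divs D = mset (map (\<lambda>i. D $$ (i, i)) [0..<min (dim_row D) (dim_col D)])"

end

theory Submission
  imports Defs "Jordan_Normal_Form.Determinant"
begin

definition mdvd :: "int \<Rightarrow> nat \<Rightarrow> int mat \<Rightarrow> bool" where
  "mdvd c k A \<longleftrightarrow> (\<forall>f g. (\<forall>i<k. f i < dim_row A) \<longrightarrow> (\<forall>i<k. g i < dim_col A) \<longrightarrow>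
     c dvd det (mat k k (\<lambda>(i,j). A $$ (f i, g j))))"

lemma mdvd_mult_left:
  assumes X: "X \<in> carrier_mat r n" and B: "B \<in> carrier_mat n c" and m: "mdvd c0 k B"
  shows "mdvd c0 k (X * B)"
  unfolding mdvd_def
proof (intro allI impI)
  fix f g
  assume f: "\<forall>i<k. f i < dim_row (X * B)" and g: "\<forall>i<k. g i < dim_col (X * B)"
  define X' where "X' = mat k n (\<lambda>(i,l). X $$ (f i, l))"
  define B' where "B' = mat n k (\<lambda>(l,j). B $$ (l, g j))"
  have X': "X' \<in> carrier_mat k n" and B': "B' \<in> carrier_mat n k" by (auto simp: X'_def B'_def)
  have eq: "mat k k (\<lambda>(i,j). (X * B) $$ (f i, g j)) = X' * B'"
    apply (rule eq_matI)
    using f g X B by (auto simp: X'_def B'_def scalar_prod_def intro!: sum.cong)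
  define F where "F = {h. (\<forall>i\<in>{0..<k}. h i \<in> {0..<n}) \<and> (\<forall>i. i \<notin> {0..<k} \<longrightarrow> h i = i)}"
  have "det (X' * B') = (\<Sum>h\<in>F. det (mat\<^sub>r k k (\<lambda>i. X' $$ (i, h i) \<cdot>\<^sub>v row B' (h i))))"
    unfolding mat_mul_finsum_alt[OF X' B'] F_def
    by (rule det_linear_rows_sum, insert B', auto)
  also have "\<dots> = (\<Sum>h\<in>F. prod (\<lambda>i. X' $$ (i, h i)) {0..<k} * det (mat\<^sub>r k k (\<lambda>i. row B' (h i))))"
    by (rule sum.cong[OF refl], rule det_rows_mul, insert B', auto)
  finally have d: "det (X' * B') = \<dots>" .
  have "c0 dvd det (mat\<^sub>r k k (\<lambda>i. row B' (h i)))" if h: "h \<in> F" for h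
  proof -
    have "mat\<^sub>r k k (\<lambda>i. row B' (h i)) = mat k k (\<lambda>(i,j). B $$ (h i, g j))"
      apply (rule eq_matI) using h B' by (auto simp: F_def B'_def)
    moreover have "c0 dvd det (mat k k (\<lambda>(i,j). B $$ (h i, g j)))"
      using m h B g X unfolding mdvd_def F_def by auto
    ultimately show ?thesis by simp
  qed
  then show "c0 dvd det (mat k k (\<lambda>(i,j). (X * B) $$ (f i, g j)))"
    unfolding eq d by (auto intro!: dvd_sum dvd_mult)
qed

lemma mdvd_transpose:
  assumes "mdvd c k A" shows "mdvd c k (transpose_mat A)"
  unfolding mdvd_def
proof (intro allI impI)
  fix f g
  assume f: "\<forall>i<k. f i < dim_row (transpose_mat A)" and g: "\<forall>i<k. g i < dim_col (transpose_mat A)"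
  have "mat k k (\<lambda>(i,j). transpose_mat A $$ (f i, g j)) = transpose_mat (mat k k (\<lambda>(i,j). A $$ (g i, f j)))"
    by (rule eq_matI, insert f g, auto)
  moreover have "det (transpose_mat (mat k k (\<lambda>(i,j). A $$ (g i, f j)))) = det (mat k k (\<lambda>(i,j). A $$ (g i, f j)))"
    by (rule det_transpose, auto)
  moreover have "c dvd det (mat k k (\<lambda>(i,j). A $$ (g i, f j)))"
    using assms f g unfolding mdvd_def by auto
  ultimately show "c dvd det (mat k k (\<lambda>(i,j). transpose_mat A $$ (f i, g j)))" by simp
qed

lemma mdvd_mult_right:
  assumes B: "B \<in> carrier_mat r n" and Y: "Y \<in> carrier_mat n c" and m: "mdvd c0 k B"
  shows "mdvd c0 k (B * Y)"
proof -
  have "mdvd c0 k (transpose_mat Y * transpose_mat B)"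
    by (rule mdvd_mult_left[of _ c n _ r], insert B Y mdvd_transpose[OF m], auto)
  moreover have "transpose_mat (transpose_mat Y * transpose_mat B) = B * Y"
    using transpose_mult[OF B Y] by (metis transpose_transpose)
  ultimately show ?thesis using mdvd_transpose by metis
qed

lemma prod_chain_dvd:
  fixes d :: "nat \<Rightarrow> int"
  assumes ch: "\<And>i j. i \<le> j \<Longrightarrow> j < n \<Longrightarrow> d i dvd d j"
  shows "finite S \<Longrightarrow> S \<subseteq> {..<n} \<Longrightarrow> card S = k \<Longrightarrow> (\<Prod>i<k. d i) dvd (\<Prod>s\<in>S. d s)"
proof (induction k arbitrary: S)
  case 0 then show ?case by simp
next
  case (Suc k)
  then have ne: "S \<noteq> {}" by auto
  define M where "M = Max S"
  have MS: "M \<in> S" using Suc ne by (simp add: M_def)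
  have Mn: "M < n" using MS Suc by auto
  have "S \<subseteq> {..M}" using Suc by (auto simp: M_def)
  then have "card S \<le> Suc M" using card_mono[of "{..M}" S] by auto
  then have kM: "k \<le> M" using Suc by simp
  have cS: "card (S - {M}) = k" using Suc MS by simp
  have IH: "(\<Prod>i<k. d i) dvd (\<Prod>s\<in>S - {M}. d s)"
    using Suc.IH[of "S - {M}"] cS Suc.prems by auto
  have e1: "(\<Prod>s\<in>S. d s) = d M * (\<Prod>s\<in>S - {M}. d s)"
    using Suc MS by (simp add: prod.remove)
  have e2: "(\<Prod>i<Suc k. d i) = d k * (\<Prod>i<k. d i)" by simp
  have "d k dvd d M" using ch kM Mn by auto
  then have "d k * (\<Prod>i<k. d i) dvd d M * (\<Prod>s\<in>S - {M}. d s)"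
    using IH by (rule mult_dvd_mono)
  then show ?case unfolding e1 e2 .
qed

lemma diag_mdvd:
  fixes D :: "int mat"
  assumes D: "D \<in> carrier_mat n n"
    and dg: "\<And>i j. i < n \<Longrightarrow> j < n \<Longrightarrow> i \<noteq> j \<Longrightarrow> D $$ (i,j) = 0"
    and ch: "\<And>i j. i \<le> j \<Longrightarrow> j < n \<Longrightarrow> D $$ (i,i) dvd D $$ (j,j)"
  shows "mdvd (\<Prod>i<k. D $$ (i,i)) k D"
  unfolding mdvd_def
proof (intro allI impI)
  fix f g
  assume f: "\<forall>i<k. f i < dim_row D" and g: "\<forall>i<k. g i < dim_col D"
  let ?M = "mat k k (\<lambda>(i,j). D $$ (f i, g j))"
  let ?c = "\<Prod>i<k. D $$ (i,i)"
  show "?c dvd det ?M"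
  proof (cases "inj_on f {..<k}")
    case False
    then obtain i j where ij: "i < k" "j < k" "i \<noteq> j" "f i = f j" unfolding inj_on_def by auto
    have r: "row ?M i = row ?M j"
      by (rule eq_vecI) (simp_all add: ij)
    have "det ?M = 0"
      by (rule det_identical_rows[OF mat_carrier ij(3) ij(1) ij(2) r])
    then show ?thesis by simp
  next
    case True
    have c1: "?c dvd (\<Prod>s\<in>f ` {..<k}. D $$ (s,s))"
    proof (rule prod_chain_dvd[of n])
      show "\<And>i j. i \<le> j \<Longrightarrow> j < n \<Longrightarrow> D $$ (i, i) dvd D $$ (j, j)" by (rule ch)
      show "f ` {..<k} \<subseteq> {..<n}" using f D by auto
      show "card (f ` {..<k}) = k" using True by (simp add: card_image)
    qed simp
    have c2: "(\<Prod>s\<in>f ` {..<k}. D $$ (s,s)) = (\<Prod>i<k. D $$ (f i, f i))"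
      using True by (simp add: prod.reindex)
    have pd: "?c dvd (\<Prod>i = 0..<k. ?M $$ (i, p i))" if p: "p permutes {0..<k}" for p
    proof (cases "\<forall>i<k. f i = g (p i)")
      case True
      have "(\<Prod>i = 0..<k. ?M $$ (i, p i)) = (\<Prod>i<k. D $$ (f i, f i))"
        unfolding atLeast0LessThan
      proof (rule prod.cong[OF refl])
        fix i assume i: "i \<in> {..<k}"
        then have "p i < k" using permutes_in_image[OF p, of i] by simp
        then show "?M $$ (i, p i) = D $$ (f i, f i)" using i True by simp
      qed
      then show ?thesis using c1 c2 by simp
    next
      case False
      then obtain i where i: "i < k" "f i \<noteq> g (p i)" by auto
      have pi: "p i < k" using permutes_in_image[OF p, of i] i by simp
      have "?M $$ (i, p i) = D $$ (f i, g (p i))" using i pi by simp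
      also have "\<dots> = 0" using dg[of "f i" "g (p i)"] i pi f g D by simp
      finally have "?M $$ (i, p i) = 0" .
      then have z: "(\<Prod>i = 0..<k. ?M $$ (i, p i)) = 0" using i(1)
        by (subst prod_zero_iff) auto
      show ?thesis unfolding z by (rule dvd_0_right)
    qed
    show ?thesis
      unfolding det_def'[of ?M k, OF mat_carrier]
    proof (rule dvd_sum)
      fix p assume "p \<in> {p. p permutes {0..<k}}"
      then have "?c dvd (\<Prod>i = 0..<k. ?M $$ (i, p i))" using pd by simp
      then show "?c dvd signof p * (\<Prod>i = 0..<k. ?M $$ (i, p i))" by (rule dvd_mult)
    qed
  qed
qed

lemma diag_lead_minor:
  fixes D :: "int mat"
  assumes D: "D \<in> carrier_mat n n" and k: "k \<le> n"
    and dg: "\<And>i j. i < n \<Longrightarrow> j < n \<Longrightarrow> i \<noteq> j \<Longrightarrow> D $$ (i,j) = 0"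
  shows "det (mat k k (\<lambda>(i,j). D $$ (id i, id j))) = (\<Prod>i<k. D $$ (i,i))"
proof -
  have "det (mat k k (\<lambda>(i,j). D $$ (id i, id j))) = prod_list (diag_mat (mat k k (\<lambda>(i,j). D $$ (id i, id j))))"
    by (rule det_upper_triangular, insert dg k, auto simp: upper_triangular_def)
  also have "\<dots> = (\<Prod>i<k. D $$ (i,i))"
    by (simp add: diag_mat_def prod.distinct_set_conv_list[symmetric] atLeast0LessThan)
  finally show ?thesis .
qed


definition psum :: "nat \<Rightarrow> nat \<Rightarrow> 'a::comm_ring_1 poly" where
  "psum p m = (\<Sum>a<p. monom 1 (a*m))"

lemma coeff_psum:
  assumes "m > 0"
  shows "coeff (psum p m :: 'a::comm_ring_1 poly) k = (if m dvd k \<and> k < p*m then 1 else 0)"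
proof -
  have "coeff (psum p m :: 'a poly) k = (\<Sum>a<p. if a = k div m then (if m dvd k then 1 else 0) else (0::'a))"
    unfolding psum_def coeff_sum
    by (rule sum.cong[OF refl], insert assms, auto simp: coeff_monom)
  also have "\<dots> = (if k div m < p then (if m dvd k then 1 else 0) else 0)"
    by (simp add: sum.delta)
  also have "\<dots> = (if m dvd k \<and> k < p*m then 1 else 0)"
  proof -
    have "k div m < p \<longleftrightarrow> k < p * m" using div_less_iff_less_mult[OF assms, of k p] by (simp add: mult.commute)
    then show ?thesis by auto
  qed
  finally show ?thesis .
qed

lemma degree_psum:
  assumes "m > 0" "p > 0"
  shows "degree (psum p m :: 'a::{comm_ring_1} poly) = (p - 1) * m"
    and "lead_coeff (psum p m :: 'a::{comm_ring_1} poly) = 1"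
proof -
  have le: "degree (psum p m :: 'a poly) \<le> (p - 1) * m"
  proof (rule degree_le, intro allI impI)
    fix k assume kk: "(p - 1) * m < k"
    have "\<not> (m dvd k \<and> k < p * m)"
    proof
      assume "m dvd k \<and> k < p * m"
      then obtain c where c: "k = m * c" "k < p * m" by (auto elim!: dvdE)
      then have "(p - 1) * m < c * m" using kk by (simp add: mult.commute)
      then have "p - 1 < c" by (rule mult_less_cancel2[THEN iffD1, THEN conjunct2])
      then have "p \<le> c" by simp
      then have "p * m \<le> c * m" by (rule mult_le_mono1)
      then show False using c by (simp add: mult.commute)
    qed
    then show "coeff (psum p m :: 'a poly) k = 0" using assms by (simp add: coeff_psum)
  qed
  have lt: "(p - 1) * m < p * m" using assms by simp
  have c: "coeff (psum p m :: 'a poly) ((p - 1) * m) = 1"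
    using assms lt by (simp add: coeff_psum)
  show d: "degree (psum p m :: 'a poly) = (p - 1) * m"
    using le le_degree[of "psum p m :: 'a poly" "(p-1)*m"] c by fastforce
  show "lead_coeff (psum p m :: 'a poly) = 1" using c d by simp
qed

lemma prod_roots_dvd:
  fixes q :: "complex poly"
  assumes "finite T" "inj_on r T" "\<forall>t\<in>T. poly q (r t) = 0"
  shows "(\<Prod>t\<in>T. [:- r t, 1:]) dvd q"
  using assms
proof (induction T arbitrary: q rule: finite_induct)
  case empty then show ?case by simp
next
  case (insert x F)
  from insert obtain h where h: "q = (\<Prod>t\<in>F. [:- r t, 1:]) * h"
    by (auto elim!: dvdE simp: inj_on_insert)
  have "poly (\<Prod>t\<in>F. [:- r t, 1:]) (r x) \<noteq> 0"
    using insert by (auto simp: poly_prod inj_on_def)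
  moreover have "poly q (r x) = 0" using insert by auto
  ultimately have "poly h (r x) = 0" using h by simp
  then have "[:- r x, 1:] dvd h" by (simp add: dvd_iff_poly_eq_0)
  then have "[:- r x, 1:] * (\<Prod>t\<in>F. [:- r t, 1:]) dvd h * (\<Prod>t\<in>F. [:- r t, 1:])"
    by (rule mult_dvd_mono) (rule dvd_refl)
  then have "[:- r x, 1:] * (\<Prod>t\<in>F. [:- r t, 1:]) dvd q"
    unfolding h by (simp only: mult.commute[of h])
  then show ?case by (simp only: prod.insert[OF insert(1) insert(2)])
qed

lemma cyclo_1: "cyclo 1 = [:-1, 1:]"
proof -
  have S: "{k. k < (1::nat) \<and> coprime k 1} = {0}" by auto
  show ?thesis unfolding cyclo_def S
  proof (rule the_equality)
    have "map_poly (of_int :: int \<Rightarrow> complex) [:- 1, 1:] = [:- 1, 1:]"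
      by (rule poly_eqI) (auto simp: coeff_map_poly coeff_pCons split: nat.splits)
    then show "map_poly of_int [:- 1, 1:] = (\<Prod>k\<in>{0::nat}. [:- cis (2 * pi * real k / real 1), 1:] :: complex poly)"
      by simp
  next
    fix q :: "int poly"
    assume "map_poly of_int q = (\<Prod>k\<in>{0::nat}. [:- cis (2 * pi * real k / real 1), 1:] :: complex poly)"
    moreover have "map_poly (of_int :: int \<Rightarrow> complex) [:- 1, 1:] = [:- 1, 1:]"
      by (rule poly_eqI) (auto simp: coeff_map_poly coeff_pCons split: nat.splits)
    ultimately have "map_poly (of_int :: int \<Rightarrow> complex) q = map_poly of_int [:-1, 1:]" by simp
    then show "q = [:-1, 1:]"
      by (intro poly_eqI) (metis coeff_map_poly of_int_0 of_int_eq_iff)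
  qed
qed

lemma map_psum: "map_poly (of_int :: int \<Rightarrow> complex) (psum p m) = psum p m"
  by (rule poly_eqI) (auto simp: coeff_map_poly psum_def coeff_sum intro!: sum.cong)


lemma cyclo_pp:
  assumes p: "prime p"
  shows "cyclo (p ^ Suc i) = psum p (p ^ i)"
proof -
  define m where "m = p ^ i"
  define n where "n = p ^ Suc i"
  have nm: "n = p * m" by (simp add: n_def m_def)
  have p1: "p > 1" using p prime_gt_1_nat by blast
  have m0: "m > 0" using p1 by (simp add: m_def)
  have n2: "n \<ge> 2"
  proof -
    have "2 * 1 \<le> p * m" by (rule mult_le_mono) (use p1 m0 in auto)
    then show ?thesis by (simp add: nm)
  qed
  define S where "S = {k. k < n \<and> coprime k n}"
  define z where "z = (\<lambda>k::nat. cis (2 * pi * real k / real n))"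
  have finS: "finite S" by (simp add: S_def)
  have injn: "inj_on z {..<n}"
    using bij_betw_roots_unity[of n] n2 unfolding bij_betw_def z_def by simp
  have "S \<subseteq> {..<n}" by (auto simp: S_def)
  then have injS: "inj_on z S" using injn by (rule inj_on_subset[rotated])
  have roots: "\<forall>k\<in>S. poly (psum p m :: complex poly) (z k) = 0"
  proof
    fix k assume k: "k \<in> S"
    define w where "w = cis (2 * pi * real k / real p)"
    have a1: "real m * (2 * pi * real k / real n) = 2 * pi * real k / real p"
      using m0 nm by (simp add: field_simps)
    have zw: "z k ^ m = w"
      unfolding z_def w_def DeMoivre a1 ..
    have a2: "real p * (2 * pi * real k / real p) = 2 * pi * real k"
      using p1 by (simp add: field_simps)
    have "w ^ p = cis (2 * pi * real k)"
      unfolding w_def DeMoivre a2 ..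
    also have "\<dots> = 1" by (simp add: cis_multiple_2pi)
    finally have wp: "w ^ p = 1" .
    have w1: "w \<noteq> 1"
    proof
      assume "w = 1"
      then have "cos (2 * pi * real k / real p) = 1" unfolding w_def by (simp add: complex_eq_iff)
      then obtain j :: int where "2 * pi * real k / real p = j * 2 * pi" by (auto simp: cos_one_2pi_int)
      then have "real k = real p * j" using p1 by (simp add: field_simps)
      then have "real_of_int (int k) = real_of_int (int p * j)" by simp
      then have "int k = int p * j" by (simp only: of_int_eq_iff)
      then have "int p dvd int k" by simp
      then have pk: "p dvd k" by simp
      have pn: "p dvd n" by (simp add: nm)
      have "coprime k n" using k by (simp add: S_def)
      then have "p = 1" using coprime_common_divisor_nat pk pn by blast
      then show False using p1 by simp
    qed
    have "poly (psum p m :: complex poly) (z k) = (\<Sum>a<p. w ^ a)"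
      unfolding psum_def poly_sum poly_monom
    proof (rule sum.cong[OF refl])
      fix a show "1 * z k ^ (a * m) = w ^ a" unfolding zw[symmetric] power_mult[symmetric]
        by (simp add: mult.commute)
    qed
    moreover have "(w - 1) * (\<Sum>a<p. w ^ a) = 0" using power_diff_1_eq[of w p] wp by simp
    ultimately show "poly (psum p m :: complex poly) (z k) = 0" using w1 by simp
  qed
  define P where "P = (\<Prod>k\<in>S. [:- z k, 1:])"
  have dv: "P dvd psum p m" unfolding P_def by (rule prod_roots_dvd[OF finS injS roots])
  have cardS: "card S = totient n"
  proof -
    have "S = totatives n"
    proof (rule Set.set_eqI, rule iffI)
      fix x assume "x \<in> S"
      then have x: "x < n" "coprime x n" by (auto simp: S_def)
      have "x \<noteq> 0"
      proof
        assume "x = 0"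
        with x(2) have "n = 1" by simp
        then show False using n2 by simp
      qed
      then show "x \<in> totatives n" using x by (simp add: in_totatives_iff)
    next
      fix x assume "x \<in> totatives n"
      then have x: "0 < x" "x \<le> n" "coprime x n" by (auto simp: in_totatives_iff)
      have "x \<noteq> n" using x n2 by auto
      then show "x \<in> S" using x by (simp add: S_def)
    qed
    then show ?thesis by (simp add: totient_def)
  qed
  have degP: "degree P = card S" unfolding P_def
    by (subst degree_prod_sum_eq) auto
  have lcP: "lead_coeff P = 1" unfolding P_def by (simp add: lead_coeff_prod)
  have degq: "degree (psum p m :: complex poly) = card S"
    using degree_psum(1)[OF m0, of p] p1 cardS totient_prime_power_Suc[OF p, of i]
    by (simp add: n_def m_def mult.commute)
  have lcq: "lead_coeff (psum p m :: complex poly) = 1" using degree_psum(2)[OF m0, of p] p1 by simp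
  have q0: "(psum p m :: complex poly) \<noteq> 0" using lcq by auto
  from dv obtain c where c: "psum p m = P * c" by (auto elim!: dvdE)
  have c0: "c \<noteq> 0" using c q0 by auto
  have P0: "P \<noteq> 0" using lcP by auto
  have "degree c = 0" using c degP degq degree_mult_eq[OF P0 c0] by simp
  then obtain c0 where cc: "c = [:c0:]" by (metis degree_eq_zeroE)
  have c00: "c0 \<noteq> 0" using c0 cc by simp
  have "c0 = 1" using lcq lcP c cc c00 by (simp add: lead_coeff_mult)
  then have eq: "psum p m = P" using c cc by simp
  have eqm: "map_poly of_int (psum p m) = P" using eq map_psum by simp
  show ?thesis unfolding cyclo_def m_def[symmetric] n_def[symmetric]
  proof (rule the_equality)
    show "map_poly of_int (psum p m) = (\<Prod>k\<in>{k. k < n \<and> coprime k n}. [:- cis (2 * pi * real k / real n), 1:])"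
      unfolding eqm P_def S_def z_def ..
  next
    fix q :: "int poly"
    assume "map_poly of_int q = (\<Prod>k\<in>{k. k < n \<and> coprime k n}. [:- cis (2 * pi * real k / real n), 1:])"
    then have "map_poly (of_int :: int \<Rightarrow> complex) q = map_poly of_int (psum p m)"
      unfolding eqm P_def S_def z_def .
    then show "q = psum p m"
      by (intro poly_eqI) (metis coeff_map_poly of_int_0 of_int_eq_iff)
  qed
qed


lemma blk_off_mono:
  assumes k: "k > 0" and d1: "d1 dvd k" and d2: "d2 dvd k" and lt: "d1 < d2"
  shows "blk_off k d1 + totient d1 \<le> blk_off k d2"
proof -
  have fin: "finite {d'. d' dvd k \<and> d' < d2}" by (rule finite_subset[of _ "{..<d2}"]) auto
  have "blk_off k d1 + totient d1 = (\<Sum>d'\<in>insert d1 {d'. d' dvd k \<and> d' < d1}. totient d')"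
    unfolding blk_off_def by (subst sum.insert) auto
  also have "\<dots> \<le> blk_off k d2" unfolding blk_off_def
    by (rule sum_mono2[OF fin]) (use d1 lt in auto)
  finally show ?thesis .
qed

lemma blk_of_unique:
  assumes k: "k > 0" and d: "d dvd k" and r: "blk_off k d \<le> r" "r < blk_off k d + totient d"
  shows "blk_of k r = d"
  unfolding blk_of_def
proof (rule the_equality)
  show "d dvd k \<and> blk_off k d \<le> r \<and> r < blk_off k d + totient d" using assms by auto
next
  fix d' assume d': "d' dvd k \<and> blk_off k d' \<le> r \<and> r < blk_off k d' + totient d'"
  show "d' = d"
  proof (rule ccontr)
    assume "d' \<noteq> d"
    then consider "d' < d" | "d < d'" by linarith
    then show False
    proof cases
      case 1 then show False using blk_off_mono[OF k _ d 1] d' r by fastforce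
    next
      case 2 then show False using blk_off_mono[OF k d _ 2] d' r by fastforce
    qed
  qed
qed

lemma blk_off_lift:
  assumes p: "prime p" and d: "d dvd p ^ e"
  shows "blk_off (p ^ Suc e) d = blk_off (p ^ e) d"
proof -
  have p1: "p > 1" using p prime_gt_1_nat by blast
  have dle: "d \<le> p ^ e" using d dvd_imp_le p1 by auto
  have "{d'. d' dvd p ^ Suc e \<and> d' < d} = {d'. d' dvd p ^ e \<and> d' < d}"
  proof (rule Set.set_eqI, rule iffI)
    fix x assume x: "x \<in> {d'. d' dvd p ^ Suc e \<and> d' < d}"
    have xd: "x dvd p ^ Suc e" using x by (simp only: mem_Collect_eq)
    obtain j where j: "j \<le> Suc e" "x = p ^ j" using divides_primepow_nat[OF p, of x "Suc e"] xd by blast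
    have "j \<noteq> Suc e"
    proof
      assume "j = Suc e"
      then have "x = p * p ^ e" using j by simp
      then have "x > p ^ e" using p1 by simp
      then show False using x dle by simp
    qed
    then have "x dvd p ^ e" using j by (simp add: le_imp_power_dvd)
    then show "x \<in> {d'. d' dvd p ^ e \<and> d' < d}" using x by simp
  next
    fix x assume "x \<in> {d'. d' dvd p ^ e \<and> d' < d}"
    then show "x \<in> {d'. d' dvd p ^ Suc e \<and> d' < d}"
      by (auto intro: dvd_trans[of x "p ^ e"] simp: le_imp_power_dvd)
  qed
  then show ?thesis unfolding blk_off_def by simp
qed

lemma blk_off_top:
  assumes p: "prime p"
  shows "blk_off (p ^ Suc e) (p ^ Suc e) = p ^ e"
proof -
  have p1: "p > 1" using p prime_gt_1_nat by blast
  have "{d'. d' dvd p ^ Suc e \<and> d' < p ^ Suc e} = {d'. d' dvd p ^ e}"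
  proof (rule Set.set_eqI, rule iffI)
    fix x assume x: "x \<in> {d'. d' dvd p ^ Suc e \<and> d' < p ^ Suc e}"
    have xd: "x dvd p ^ Suc e" using x by (simp only: mem_Collect_eq)
    obtain j where j: "j \<le> Suc e" "x = p ^ j" using divides_primepow_nat[OF p, of x "Suc e"] xd by blast
    have "j \<noteq> Suc e" using j x by auto
    then show "x \<in> {d'. d' dvd p ^ e}" using j by (simp add: le_imp_power_dvd)
  next
    fix x assume "x \<in> {d'. d' dvd p ^ e}"
    then have x: "x dvd p ^ e" by simp
    then have "x \<le> p ^ e" using dvd_imp_le p1 by auto
    also have "\<dots> < p ^ Suc e" using p1 by simp
    finally show "x \<in> {d'. d' dvd p ^ Suc e \<and> d' < p ^ Suc e}"
      using x by (auto intro: dvd_trans[of x "p ^ e"] simp: le_imp_power_dvd)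
  qed
  then show ?thesis unfolding blk_off_def by (simp add: totient_divisor_sum)
qed

lemma totient_ppS: assumes "prime p" shows "totient (p ^ Suc e) = p ^ Suc e - p ^ e"
proof -
  have "totient (p ^ Suc e) = p ^ e * (p - 1)" by (rule totient_prime_power_Suc[OF assms])
  then show ?thesis by (simp add: diff_mult_distrib2 mult.commute)
qed

lemma blk_exists:
  assumes p: "prime p"
  shows "r < p ^ e \<Longrightarrow> \<exists>d. d dvd p ^ e \<and> blk_off (p ^ e) d \<le> r \<and> r < blk_off (p ^ e) d + totient d"
proof (induction e arbitrary: r)
  case 0
  have "blk_off 1 1 = 0" unfolding blk_off_def by simp
  then show ?case using 0 by (intro exI[of _ 1]) simp
next
  case (Suc e)
  have p1: "p > 1" using p prime_gt_1_nat by blast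
  show ?case
  proof (cases "r < p ^ e")
    case True
    from Suc.IH[OF True] obtain d where d: "d dvd p ^ e" "blk_off (p ^ e) d \<le> r" "r < blk_off (p ^ e) d + totient d" by blast
    then show ?thesis using blk_off_lift[OF p d(1)]
      by (intro exI[of _ d]) (auto intro: dvd_trans[of d "p ^ e"] simp: le_imp_power_dvd)
  next
    case False
    have "p ^ e \<le> p ^ Suc e" using p1 by simp
    then show ?thesis using False Suc.prems blk_off_top[OF p, of e] totient_ppS[OF p, of e]
      by (intro exI[of _ "p ^ Suc e"]) auto
  qed
qed


lemma red_mod_ex:
  fixes f g :: "int poly"
  assumes g: "lead_coeff g = 1"
  shows "\<exists>q. f = g * q + red_mod f g \<and> (red_mod f g = 0 \<or> degree (red_mod f g) < degree g)"
proof -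
  have g0: "g \<noteq> 0" using g by auto
  obtain q r where qr: "pseudo_divmod f g = (q, r)" by (cases "pseudo_divmod f g")
  have rr: "red_mod f g = r" by (simp add: red_mod_def pseudo_mod_def qr)
  from pseudo_divmod[OF g0 qr] g have "f = g * q + r" "r = 0 \<or> degree r < degree g" by auto
  then show ?thesis unfolding rr by blast
qed

lemma red_mod_unique:
  fixes f g q r :: "int poly"
  assumes g: "lead_coeff g = 1" and f: "f = g * q + r" and r: "r = 0 \<or> degree r < degree g"
  shows "red_mod f g = r"
proof -
  have g0: "g \<noteq> 0" using g by auto
  obtain q' where q': "f = g * q' + red_mod f g" and r': "red_mod f g = 0 \<or> degree (red_mod f g) < degree g"
    using red_mod_ex[OF g] by blast
  define r' where "r' = red_mod f g"
  have eq: "g * (q - q') = r' - r" using f q' unfolding r'_def by (simp add: algebra_simps)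
  show ?thesis
  proof (rule ccontr)
    assume ne: "red_mod f g \<noteq> r"
    then have ne': "r' - r \<noteq> 0" by (simp add: r'_def)
    then have qq: "q - q' \<noteq> 0" using eq by auto
    have "degree (r' - r) < degree g"
    proof (cases "degree g = 0")
      case True
      then have "r = 0" "r' = 0" using r r' by (auto simp: r'_def)
      then show ?thesis using ne' by simp
    next
      case False
      have "degree r < degree g" using r False by auto
      moreover have "degree r' < degree g" using r' False by (auto simp: r'_def)
      ultimately show ?thesis using degree_diff_le_max[of r' r] by linarith
    qed
    moreover have "degree (g * (q - q')) = degree g + degree (q - q')"
      by (rule degree_mult_eq[OF g0 qq])
    ultimately show False using eq by simp
  qed
qed

lemma red_mod_cong:
  fixes f1 f2 g :: "int poly"
  assumes g: "lead_coeff g = 1" and d: "g dvd f1 - f2"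
  shows "red_mod f1 g = red_mod f2 g"
proof -
  obtain q2 where q2: "f2 = g * q2 + red_mod f2 g" and r2: "red_mod f2 g = 0 \<or> degree (red_mod f2 g) < degree g"
    using red_mod_ex[OF g] by blast
  obtain h where h: "f1 - f2 = g * h" using d by (auto elim!: dvdE)
  have "f1 = g * (q2 + h) + red_mod f2 g" using q2 h by (simp add: algebra_simps)
  then show ?thesis using red_mod_unique[OF g _ r2] by blast
qed

lemma x_dvd_pow: "(x::'a::comm_ring_1) - 1 dvd x ^ t - 1"
  using power_diff_1_eq[of x t] by simp

lemma monom_dvd_monom:
  assumes "d dvd m"
  shows "monom (1::int) d - 1 dvd monom 1 m - 1"
proof -
  obtain c where c: "m = d * c" using assms by (auto elim!: dvdE)
  have "monom (1::int) m = (monom 1 d) ^ c" by (simp add: monom_power c)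
  then show ?thesis using x_dvd_pow[of "monom (1::int) d" c] by simp
qed

lemma aux_factor: "(a::'a::comm_ring_1) * b - a = a * (b - 1)"
  by (simp add: right_diff_distrib)

lemma monom_mod_dvd:
  assumes "m > 0"
  shows "monom (1::int) m - 1 dvd monom 1 j - monom 1 (j mod m)"
proof -
  have e1: "monom (1::int) (m * (j div m)) = (monom 1 m) ^ (j div m)" by (simp add: monom_power)
  have e2: "monom (1::int) j = monom 1 (j mod m) * monom 1 (m * (j div m))"
    by (simp add: mult_monom)
  have "monom (1::int) j - monom 1 (j mod m) = monom 1 (j mod m) * ((monom 1 m) ^ (j div m) - 1)"
    unfolding e2 e1 by (rule aux_factor)
  moreover have "monom (1::int) m - 1 dvd (monom 1 m) ^ (j div m) - 1" by (rule x_dvd_pow)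
  ultimately show ?thesis by (simp add: dvd_mult)
qed


lemma cyclo_cases:
  assumes p: "prime p" and d: "d dvd p ^ e"
  shows "(d = 1 \<and> cyclo d = [:-1,1:]) \<or> (\<exists>i. d = p ^ Suc i \<and> cyclo d = psum p (p ^ i))"
proof -
  obtain j where j: "d = p ^ j" using divides_primepow_nat[OF p] d by auto
  show ?thesis
  proof (cases j)
    case 0 then show ?thesis using j cyclo_1 by simp
  next
    case (Suc i) then show ?thesis using j cyclo_pp[OF p, of i] by blast
  qed
qed

lemma cyclo_monic:
  assumes p: "prime p" and d: "d dvd p ^ e"
  shows "lead_coeff (cyclo d) = 1"
proof -
  have p1: "p > 1" using p prime_gt_1_nat by blast
  from cyclo_cases[OF p d] show ?thesis
  proof
    assume "d = 1 \<and> cyclo d = [:-1,1:]"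
    then have "cyclo d = [:-1,1:]" by blast
    then show ?thesis by simp
  next
    assume "\<exists>i. d = p ^ Suc i \<and> cyclo d = psum p (p ^ i)"
    then obtain i where "cyclo d = psum p (p ^ i)" by blast
    then show ?thesis using degree_psum(2)[of "p ^ i" p] p1 by simp
  qed
qed

lemma cyclo_dvd_X:
  assumes p: "prime p" and d: "d dvd p ^ e"
  shows "cyclo d dvd monom 1 d - 1"
proof -
  from cyclo_cases[OF p d] show ?thesis
  proof
    assume a: "d = 1 \<and> cyclo d = [:-1,1:]"
    have "monom (1::int) 1 - 1 = [:-1,1:]"
      by (rule poly_eqI) (auto simp: coeff_monom coeff_pCons split: nat.splits)
    moreover have "cyclo d = [:-1,1:]" "d = 1" using a by blast+
    ultimately show ?thesis by simp
  next
    assume "\<exists>i. d = p ^ Suc i \<and> cyclo d = psum p (p ^ i)"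
    then obtain i where i: "d = p ^ Suc i" "cyclo d = psum p (p ^ i)" by blast
    have ps: "psum p (p ^ i) = (\<Sum>a<p. (monom (1::int) (p ^ i)) ^ a)"
      unfolding psum_def by (simp add: monom_power mult.commute)
    have "monom (1::int) d = (monom 1 (p ^ i)) ^ p" using i by (simp add: monom_power mult.commute)
    then have "monom (1::int) d - 1 = (monom 1 (p ^ i) - 1) * psum p (p ^ i)"
      using power_diff_1_eq[of "monom (1::int) (p ^ i)" p] ps by simp
    then show ?thesis using i by simp
  qed
qed

lemma red_mod_reduce:
  assumes p: "prime p" and d: "d dvd p ^ e"
  shows "red_mod (monom 1 j) (cyclo d) = red_mod (monom 1 (j mod p ^ e)) (cyclo d)"
proof (rule red_mod_cong[OF cyclo_monic[OF p d]])
  have p0: "p ^ e > 0" using p prime_gt_0_nat by simp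
  show "cyclo d dvd monom 1 j - monom 1 (j mod p ^ e)"
    using dvd_trans[OF cyclo_dvd_X[OF p d] dvd_trans[OF monom_dvd_monom[OF d] monom_mod_dvd[OF p0]]] .
qed

lemma A_top:
  assumes p: "prime p" and r: "r < p ^ e" and j: "j < p ^ Suc e"
  shows "A_mat (p ^ Suc e) $$ (r, j) = A_mat (p ^ e) $$ (r, j mod p ^ e)"
proof -
  have p1: "p > 1" using p prime_gt_1_nat by blast
  have pe: "p ^ e > 0" "p ^ Suc e > 0" using p1 by auto
  have rN: "r < p ^ Suc e" using r p1
    by (metis less_trans_Suc one_less_power pe(1) power_Suc power_strict_increasing_iff Suc_leI less_imp_le_nat zero_less_Suc le_less_trans lessI)
  obtain d where d: "d dvd p ^ e" "blk_off (p ^ e) d \<le> r" "r < blk_off (p ^ e) d + totient d"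
    using blk_exists[OF p r] by blast
  have b1: "blk_of (p ^ e) r = d" by (rule blk_of_unique[OF pe(1) d])
  have dN: "d dvd p ^ Suc e" using d(1) by (auto intro: dvd_trans[of d "p ^ e"] simp: le_imp_power_dvd)
  have off: "blk_off (p ^ Suc e) d = blk_off (p ^ e) d" by (rule blk_off_lift[OF p d(1)])
  have b2: "blk_of (p ^ Suc e) r = d" by (rule blk_of_unique[OF pe(2) dN], insert d off, auto)
  have jm: "j mod p ^ e < p ^ e" using pe by simp
  show ?thesis
    unfolding A_mat_def using rN j r jm b1 b2 off red_mod_reduce[OF p d(1), of j]
    by (simp add: Let_def)
qed

lemma A_bot:
  assumes p: "prime p" and t: "t < p ^ Suc e - p ^ e" and j: "j < p ^ Suc e"
  shows "A_mat (p ^ Suc e) $$ (p ^ e + t, j) = coeff (red_mod (monom 1 j) (psum p (p ^ e))) t"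
proof -
  have p1: "p > 1" using p prime_gt_1_nat by blast
  have pe: "p ^ Suc e > 0" using p1 by auto
  have le: "p ^ e \<le> p ^ Suc e" using p1 by simp
  have rN: "p ^ e + t < p ^ Suc e" using t le by linarith
  have b: "blk_of (p ^ Suc e) (p ^ e + t) = p ^ Suc e"
    by (rule blk_of_unique[OF pe], insert blk_off_top[OF p, of e] totient_ppS[OF p, of e] t, auto)
  show ?thesis
    unfolding A_mat_def using rN j b blk_off_top[OF p, of e] cyclo_pp[OF p, of e]
    by (simp add: Let_def)
qed


definition Tp :: "nat \<Rightarrow> nat \<Rightarrow> nat \<Rightarrow> int poly" where
  "Tp p m b = (\<Sum>a<p-1. monom 1 (a*m+b))"

lemma coeff_Tp:
  assumes m: "m > 0" and b: "b < m"
  shows "coeff (Tp p m b) t = (if t mod m = b \<and> t div m < p - 1 then 1 else 0)"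
proof -
  have pt: "(if a * m + b = t then 1 else 0) = (if a = t div m then (if t mod m = b then 1 else 0) else (0::int))" for a
  proof (cases "a * m + b = t")
    case True
    then have "t div m = a" "t mod m = b" using m b by auto
    then show ?thesis using True by auto
  next
    case False
    have "\<not> (a = t div m \<and> t mod m = b)"
    proof
      assume "a = t div m \<and> t mod m = b"
      then have "a * m + b = t" by (metis div_mult_mod_eq)
      then show False using False by simp
    qed
    then show ?thesis using False by auto
  qed
  have "coeff (Tp p m b) t = (\<Sum>a<p-1. if a * m + b = t then 1 else 0)"
    unfolding Tp_def coeff_sum by (simp add: coeff_monom)
  also have "\<dots> = (\<Sum>a<p-1. if a = t div m then (if t mod m = b then 1 else 0) else (0::int))"
    using pt by simp
  also have "\<dots> = (if t div m < p - 1 then (if t mod m = b then 1 else 0) else 0)"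
    by (simp add: sum.delta)
  finally show ?thesis by auto
qed

lemma red_small:
  assumes p1: "p > 1" and m: "m > 0" and j: "j < (p - 1) * m"
  shows "red_mod (monom 1 j) (psum p m) = monom 1 j"
proof (rule red_mod_unique)
  show "lead_coeff (psum p m :: int poly) = 1" using degree_psum(2)[OF m, of p] p1 by simp
  show "monom 1 j = psum p m * 0 + monom (1::int) j" by simp
  show "monom (1::int) j = 0 \<or> degree (monom (1::int) j) < degree (psum p m :: int poly)"
  proof -
    have "degree (psum p m :: int poly) = (p - 1) * m" by (rule degree_psum(1)[OF m]) (use p1 in simp)
    then show ?thesis using j by (simp add: degree_monom_eq)
  qed
qed

lemma red_big:
  assumes p1: "p > 1" and m: "m > 0" and b: "b < m"
  shows "red_mod (monom 1 ((p - 1) * m + b)) (psum p m) = - Tp p m b"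
proof (rule red_mod_unique)
  show "lead_coeff (psum p m :: int poly) = 1" using degree_psum(2)[OF m, of p] p1 by simp
  have "psum p m * monom 1 b = (\<Sum>a<p. monom (1::int) (a*m+b))"
    unfolding psum_def sum_distrib_right by (simp add: mult_monom)
  also have "\<dots> = (\<Sum>a<Suc (p-1). monom (1::int) (a*m+b))" using p1 by simp
  also have "\<dots> = Tp p m b + monom 1 ((p - 1) * m + b)"
    unfolding Tp_def by (simp only: sum.lessThan_Suc)
  finally have "psum p m * monom 1 b = Tp p m b + monom 1 ((p - 1) * m + b)" .
  then show "monom 1 ((p - 1) * m + b) = psum p m * monom 1 b + - Tp p m b" by simp
  have s0: "(p - 1) * m > 0" using p1 m by simp
  have dT: "degree (Tp p m b) \<le> (p - 1) * m - 1"
  proof (rule degree_le, intro allI impI)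
    fix k assume "(p - 1) * m - 1 < k"
    then have "(p - 1) * m \<le> k" by simp
    then have "\<not> (k div m < p - 1)" using m
      by (metis div_less_iff_less_mult mult.commute not_le)
    then show "coeff (Tp p m b) k = 0" using coeff_Tp[OF m b] by simp
  qed
  have dg: "degree (psum p m :: int poly) = (p - 1) * m" by (rule degree_psum(1)[OF m]) (use p1 in simp)
  have "degree (Tp p m b) < (p - 1) * m" using dT s0 by linarith
  then have "degree (- Tp p m b) < degree (psum p m :: int poly)"
    unfolding dg by simp
  then show "- Tp p m b = 0 \<or> degree (- Tp p m b) < degree (psum p m :: int poly)" by simp
qed

definition A11 :: "nat \<Rightarrow> nat \<Rightarrow> int mat" where
  "A11 p e = mat (p ^ e) ((p - 1) * p ^ e) (\<lambda>(r,j). A_mat (p ^ e) $$ (r, j mod p ^ e))"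
definition A22 :: "nat \<Rightarrow> nat \<Rightarrow> int mat" where
  "A22 p e = mat ((p - 1) * p ^ e) (p ^ e) (\<lambda>(t,b). if t mod p ^ e = b then -1 else 0)"

lemma A_mat_dims[simp]: "dim_row (A_mat k) = k" "dim_col (A_mat k) = k"
  by (simp_all add: A_mat_def)

lemma A_block:
  assumes p: "prime p"
  shows "A_mat (p ^ Suc e) = four_block_mat (A11 p e) (A_mat (p ^ e)) (1\<^sub>m ((p - 1) * p ^ e)) (A22 p e)"
    (is "_ = ?B")
proof -
  define m where "m = p ^ e"
  define s where "s = (p - 1) * m"
  have p1: "p > 1" using p prime_gt_1_nat by blast
  have m0: "m > 0" using p1 by (simp add: m_def)
  have Ns: "p ^ Suc e = m + s" using p1 by (simp add: m_def s_def algebra_simps)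
  have s2: "p ^ Suc e - p ^ e = s" using Ns by (simp add: m_def)
  have dims0: "?B \<in> carrier_mat (m + s) (s + m)"
    by (rule four_block_carrier_mat) (simp_all add: A11_def A22_def A_mat_def m_def s_def)
  then have dims: "?B \<in> carrier_mat (m + s) (m + s)" by (simp add: add.commute)
  show ?thesis
  proof (rule eq_matI)
    show "dim_row (A_mat (p ^ Suc e)) = dim_row ?B" "dim_col (A_mat (p ^ Suc e)) = dim_col ?B"
      using dims Ns by auto
  next
    fix i j assume "i < dim_row ?B" "j < dim_col ?B"
    then have i: "i < m + s" and j: "j < m + s" using dims by auto
    have jN: "j < p ^ Suc e" using j Ns by simp
    have Bij: "?B $$ (i, j) = (if i < m then if j < s then A11 p e $$ (i, j) else A_mat (p ^ e) $$ (i, j - s)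
       else if j < s then 1\<^sub>m s $$ (i - m, j) else A22 p e $$ (i - m, j - s))"
      using i j by (simp add: A11_def A22_def m_def s_def)
    show "A_mat (p ^ Suc e) $$ (i, j) = ?B $$ (i, j)"
    proof (cases "i < m")
      case True
      have top: "A_mat (p ^ Suc e) $$ (i, j) = A_mat m $$ (i, j mod m)"
        using A_top[OF p _ jN, of i] True by (simp add: m_def)
      show ?thesis
      proof (cases "j < s")
        case True2: True
        then show ?thesis using top Bij True by (simp add: A11_def m_def s_def)
      next
        case False
        define b where "b = j - s"
        have b: "j = s + b" "b < m" using j False by (auto simp: b_def)
        have "j mod m = b" using b by (simp add: s_def)
        then show ?thesis using top Bij True False b by (simp add: m_def)
      qed
    next
      case False
      define t where "t = i - m"
      have t: "i = m + t" "t < s" using i False by (auto simp: t_def)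
      have bot: "A_mat (p ^ Suc e) $$ (i, j) = coeff (red_mod (monom 1 j) (psum p m)) t"
        using A_bot[OF p _ jN, of t] t s2 by (simp add: m_def)
      show ?thesis
      proof (cases "j < s")
        case True
        have "red_mod (monom 1 j) (psum p m) = monom 1 j"
          by (rule red_small[OF p1 m0], insert True, simp add: s_def)
        then show ?thesis using bot Bij False True t by (auto simp: coeff_monom)
      next
        case False2: False
        define b where "b = j - s"
        have b: "j = s + b" "b < m" using j False2 by (auto simp: b_def)
        have "red_mod (monom 1 j) (psum p m) = - Tp p m b"
          using red_big[OF p1 m0 b(2)] b by (simp add: s_def add.commute)
        moreover have "t div m < p - 1" using t m0 by (simp add: s_def div_less_iff_less_mult)
        ultimately have "A_mat (p ^ Suc e) $$ (i, j) = (if t mod m = b then -1 else 0)"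
          using bot coeff_Tp[OF m0 b(2), of p t] by simp
        then show ?thesis using Bij False False2 t b by (simp add: A22_def m_def s_def)
      qed
    qed
  qed
qed


definition eqv :: "nat \<Rightarrow> int mat \<Rightarrow> int mat \<Rightarrow> bool" where
  "eqv n M D \<longleftrightarrow> (\<exists>P P' Q Q'. P \<in> carrier_mat n n \<and> P' \<in> carrier_mat n n \<and> Q \<in> carrier_mat n n \<and> Q' \<in> carrier_mat n n
     \<and> P * P' = 1\<^sub>m n \<and> P' * P = 1\<^sub>m n \<and> Q * Q' = 1\<^sub>m n \<and> Q' * Q = 1\<^sub>m n \<and> D = P * M * Q)"

lemma eqv_refl: "M \<in> carrier_mat n n \<Longrightarrow> eqv n M M"
  unfolding eqv_def by (rule exI[of _ "1\<^sub>m n"])+ auto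

lemma inv_prod:
  fixes A B A' B' :: "int mat"
  assumes "A \<in> carrier_mat n n" "B \<in> carrier_mat n n" "A' \<in> carrier_mat n n" "B' \<in> carrier_mat n n"
    "A * A' = 1\<^sub>m n" "B * B' = 1\<^sub>m n"
  shows "(A * B) * (B' * A') = 1\<^sub>m n"
proof -
  have "(A * B) * (B' * A') = A * (B * (B' * A'))"
    by (rule assoc_mult_mat) (use assms in auto)
  also have "B * (B' * A') = (B * B') * A'"
    by (rule assoc_mult_mat[symmetric]) (use assms in auto)
  also have "\<dots> = A'" using assms left_mult_one_mat[OF assms(3)] by simp
  finally show ?thesis using assms by simp
qed

lemma assoc5:
  fixes R P M Q S :: "int mat"
  assumes "R \<in> carrier_mat n n" "P \<in> carrier_mat n n" "M \<in> carrier_mat n n" "Q \<in> carrier_mat n n" "S \<in> carrier_mat n n"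
  shows "R * (P * M * Q) * S = (R * P) * M * (Q * S)"
proof -
  have "R * (P * M * Q) = R * (P * M) * Q" by (rule assoc_mult_mat[symmetric]) (use assms in auto)
  also have "R * (P * M) = R * P * M" by (rule assoc_mult_mat[symmetric]) (use assms in auto)
  finally have "R * (P * M * Q) * S = R * P * M * Q * S" by simp
  also have "\<dots> = (R * P * M) * (Q * S)" by (rule assoc_mult_mat) (use assms in auto)
  finally show ?thesis .
qed

lemma eqv_trans:
  assumes M: "M \<in> carrier_mat n n" and 1: "eqv n M D1" and 2: "eqv n D1 D2"
  shows "eqv n M D2"
proof -
  obtain P P' Q Q' where a: "P \<in> carrier_mat n n" "P' \<in> carrier_mat n n" "Q \<in> carrier_mat n n" "Q' \<in> carrier_mat n n"
    "P * P' = 1\<^sub>m n" "P' * P = 1\<^sub>m n" "Q * Q' = 1\<^sub>m n" "Q' * Q = 1\<^sub>m n" "D1 = P * M * Q"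
    using 1 unfolding eqv_def by blast
  obtain R R' S S' where b: "R \<in> carrier_mat n n" "R' \<in> carrier_mat n n" "S \<in> carrier_mat n n" "S' \<in> carrier_mat n n"
    "R * R' = 1\<^sub>m n" "R' * R = 1\<^sub>m n" "S * S' = 1\<^sub>m n" "S' * S = 1\<^sub>m n" "D2 = R * D1 * S"
    using 2 unfolding eqv_def by blast
  have i1: "(R * P) * (P' * R') = 1\<^sub>m n" by (rule inv_prod) (use a b in auto)
  have i2: "(P' * R') * (R * P) = 1\<^sub>m n" by (rule inv_prod) (use a b in auto)
  have i3: "(Q * S) * (S' * Q') = 1\<^sub>m n" by (rule inv_prod) (use a b in auto)
  have i4: "(S' * Q') * (Q * S) = 1\<^sub>m n" by (rule inv_prod) (use a b in auto)
  have e: "D2 = (R * P) * M * (Q * S)"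
    unfolding b(9) a(9) by (rule assoc5) (use a b M in auto)
  have c: "R * P \<in> carrier_mat n n" "P' * R' \<in> carrier_mat n n" "Q * S \<in> carrier_mat n n" "S' * Q' \<in> carrier_mat n n"
    using a b by auto
  show ?thesis unfolding eqv_def using i1 i2 i3 i4 e c by blast
qed

lemma eqv_smult:
  assumes M: "M \<in> carrier_mat n n" and e: "eqv n M D"
  shows "eqv n (c \<cdot>\<^sub>m M) (c \<cdot>\<^sub>m D)"
proof -
  obtain P P' Q Q' where a: "P \<in> carrier_mat n n" "P' \<in> carrier_mat n n" "Q \<in> carrier_mat n n" "Q' \<in> carrier_mat n n"
    "P * P' = 1\<^sub>m n" "P' * P = 1\<^sub>m n" "Q * Q' = 1\<^sub>m n" "Q' * Q = 1\<^sub>m n" "D = P * M * Q"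
    using e unfolding eqv_def by blast
  have "P * (c \<cdot>\<^sub>m M) = c \<cdot>\<^sub>m (P * M)" by (rule mult_smult_distrib) (use a M in auto)
  moreover have "(c \<cdot>\<^sub>m (P * M)) * Q = c \<cdot>\<^sub>m (P * M * Q)" by (rule mult_smult_assoc_mat) (use a M in auto)
  ultimately have "c \<cdot>\<^sub>m D = P * (c \<cdot>\<^sub>m M) * Q" using a by simp
  then show ?thesis unfolding eqv_def using a by blast
qed

lemma eqv_lift:
  assumes M: "M \<in> carrier_mat n n" and e: "eqv n M D"
  shows "eqv (a + n) (four_block_mat (1\<^sub>m a) (0\<^sub>m a n) (0\<^sub>m n a) M) (four_block_mat (1\<^sub>m a) (0\<^sub>m a n) (0\<^sub>m n a) D)"
proof -
  obtain P P' Q Q' where b: "P \<in> carrier_mat n n" "P' \<in> carrier_mat n n" "Q \<in> carrier_mat n n" "Q' \<in> carrier_mat n n"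
    "P * P' = 1\<^sub>m n" "P' * P = 1\<^sub>m n" "Q * Q' = 1\<^sub>m n" "Q' * Q = 1\<^sub>m n" "D = P * M * Q"
    using e unfolding eqv_def by blast
  let ?F = "\<lambda>X :: int mat. four_block_mat (1\<^sub>m a) (0\<^sub>m a n) (0\<^sub>m n a) X"
  have Fc: "X \<in> carrier_mat n n \<Longrightarrow> ?F X \<in> carrier_mat (a + n) (a + n)" for X by auto
  have Fm: "X \<in> carrier_mat n n \<Longrightarrow> Y \<in> carrier_mat n n \<Longrightarrow> ?F X * ?F Y = ?F (X * Y)" for X Y
    by (subst mult_four_block_mat[OF one_carrier_mat zero_carrier_mat zero_carrier_mat _
        one_carrier_mat zero_carrier_mat zero_carrier_mat])
       (auto simp: right_add_zero_mat[OF one_carrier_mat])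
  have F1: "?F (1\<^sub>m n) = 1\<^sub>m (a + n)" by simp
  have "?F P * ?F M = ?F (P * M)" by (rule Fm) (use b M in auto)
  moreover have "?F (P * M) * ?F Q = ?F (P * M * Q)" by (rule Fm) (use b M in auto)
  ultimately have "?F D = ?F P * ?F M * ?F Q" using b by simp
  moreover have "?F P * ?F P' = 1\<^sub>m (a + n)" "?F P' * ?F P = 1\<^sub>m (a + n)"
    "?F Q * ?F Q' = 1\<^sub>m (a + n)" "?F Q' * ?F Q = 1\<^sub>m (a + n)"
    using b Fm[of P P'] Fm[of P' P] Fm[of Q Q'] Fm[of Q' Q] by simp_all
  ultimately show ?thesis unfolding eqv_def using Fc b by blast
qed

lemma eqv_invertible:
  fixes P P' :: "int mat"
  assumes "P \<in> carrier_mat n n" "P' \<in> carrier_mat n n" "P * P' = 1\<^sub>m n" "P' * P = 1\<^sub>m n"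
  shows "invertible_mat P"
proof -
  have d: "dim_row P = n" "dim_col P = n" "dim_row P' = n" using assms(1,2) by auto
  show ?thesis unfolding invertible_mat_def inverts_mat_def square_mat.simps
    by (intro conjI exI[of _ P']) (simp_all add: d assms(3,4))
qed

lemma count_mod:
  assumes m: "m > 0" and b: "b < m"
  shows "card {i. i < k * m \<and> i mod m = b} = k"
proof -
  have "{i. i < k * m \<and> i mod m = b} = (\<lambda>a. a * m + b) ` {..<k}"
  proof (rule Set.set_eqI, rule iffI)
    fix i assume i: "i \<in> {i. i < k * m \<and> i mod m = b}"
    then have im: "i mod m = b" by simp
    have "i div m * m + i mod m = i" by (rule div_mult_mod_eq)
    then have "i = (i div m) * m + b" using im by simp
    moreover have "i div m < k" using i m by (simp add: div_less_iff_less_mult)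
    ultimately show "i \<in> (\<lambda>a. a * m + b) ` {..<k}" by blast
  next
    fix i assume "i \<in> (\<lambda>a. a * m + b) ` {..<k}"
    then obtain a where a: "a < k" "i = a * m + b" by auto
    have "a * m + b < (a + 1) * m" using b by simp
    also have "\<dots> \<le> k * m" using a by (intro mult_le_mono1) simp
    finally show "i \<in> {i. i < k * m \<and> i mod m = b}" using a b by simp
  qed
  moreover have "inj_on (\<lambda>a. a * m + b) {..<k}" using m by (auto simp: inj_on_def)
  ultimately show ?thesis by (simp add: card_image)
qed

definition Cm :: "nat \<Rightarrow> nat \<Rightarrow> int mat" where
  "Cm p e = mat ((p - 1) * p ^ e) (p ^ e) (\<lambda>(i,b). if i mod p ^ e = b then 1 else 0)"

lemma A11C:
  assumes p: "prime p"
  shows "A11 p e * Cm p e + A_mat (p ^ e) = of_nat p \<cdot>\<^sub>m A_mat (p ^ e)"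
proof (rule eq_matI)
  define m where "m = p ^ e"
  have p1: "p > 1" using p prime_gt_1_nat by blast
  have m0: "m > 0" using p1 by (simp add: m_def)
  fix r b assume "r < dim_row (of_nat p \<cdot>\<^sub>m A_mat (p ^ e))" "b < dim_col (of_nat p \<cdot>\<^sub>m A_mat (p ^ e))"
  then have r: "r < m" and b: "b < m" by (auto simp: m_def)
  have "(A11 p e * Cm p e) $$ (r, b) = (\<Sum>i\<in>{0..<(p - 1) * m}. A_mat m $$ (r, i mod m) * (if i mod m = b then 1 else 0))"
    using r b by (simp add: A11_def Cm_def m_def scalar_prod_def)
  also have "\<dots> = (\<Sum>i\<in>{0..<(p - 1) * m}. if i mod m = b then A_mat m $$ (r, b) else 0)"
    by (rule sum.cong) auto
  also have "\<dots> = of_nat (card {i. i < (p - 1) * m \<and> i mod m = b}) * A_mat m $$ (r, b)"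
    by (simp add: sum.If_cases Int_def)
  also have "\<dots> = of_nat (p - 1) * A_mat m $$ (r, b)" using count_mod[OF m0 b] by simp
  finally have "(A11 p e * Cm p e) $$ (r, b) = of_nat (p - 1) * A_mat m $$ (r, b)" .
  then show "(A11 p e * Cm p e + A_mat (p ^ e)) $$ (r, b) = (of_nat p \<cdot>\<^sub>m A_mat (p ^ e)) $$ (r, b)"
    using r b p1 by (simp add: m_def A11_def Cm_def of_nat_diff algebra_simps)
qed (auto simp: A11_def Cm_def)

lemma CA22: "Cm p e + A22 p e = 0\<^sub>m ((p - 1) * p ^ e) (p ^ e)"
  by (rule eq_matI) (auto simp: Cm_def A22_def)


lemma add_uminus_mat: "(A :: int mat) \<in> carrier_mat nr nc \<Longrightarrow> A + - A = 0\<^sub>m nr nc"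
  by (intro eq_matI) auto

lemma ut_mult:
  fixes B B2 :: "int mat"
  assumes B: "B \<in> carrier_mat a b" and B2: "B2 \<in> carrier_mat a b"
  shows "four_block_mat (1\<^sub>m a) B (0\<^sub>m b a) (1\<^sub>m b) * four_block_mat (1\<^sub>m a) B2 (0\<^sub>m b a) (1\<^sub>m b)
    = four_block_mat (1\<^sub>m a) (B2 + B) (0\<^sub>m b a) (1\<^sub>m b)"
proof -
  have "four_block_mat (1\<^sub>m a) B (0\<^sub>m b a) (1\<^sub>m b) * four_block_mat (1\<^sub>m a) B2 (0\<^sub>m b a) (1\<^sub>m b)
    = four_block_mat (1\<^sub>m a * 1\<^sub>m a + B * 0\<^sub>m b a) (1\<^sub>m a * B2 + B * 1\<^sub>m b)
        (0\<^sub>m b a * 1\<^sub>m a + 1\<^sub>m b * 0\<^sub>m b a) (0\<^sub>m b a * B2 + 1\<^sub>m b * 1\<^sub>m b)"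
    by (rule mult_four_block_mat[OF one_carrier_mat B zero_carrier_mat one_carrier_mat
          one_carrier_mat B2 zero_carrier_mat one_carrier_mat])
  also have "\<dots> = four_block_mat (1\<^sub>m a) (B2 + B) (0\<^sub>m b a) (1\<^sub>m b)"
    using B B2 by (simp add: right_add_zero_mat[OF one_carrier_mat] left_add_zero_mat)
  finally show ?thesis .
qed

lemma ut_inv:
  fixes B :: "int mat"
  assumes B: "B \<in> carrier_mat a b"
  shows "four_block_mat (1\<^sub>m a) B (0\<^sub>m b a) (1\<^sub>m b) * four_block_mat (1\<^sub>m a) (- B) (0\<^sub>m b a) (1\<^sub>m b) = 1\<^sub>m (a + b)"
    and "four_block_mat (1\<^sub>m a) (- B) (0\<^sub>m b a) (1\<^sub>m b) * four_block_mat (1\<^sub>m a) B (0\<^sub>m b a) (1\<^sub>m b) = 1\<^sub>m (a + b)"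
proof -
  have mB: "- B \<in> carrier_mat a b" using B by simp
  show "four_block_mat (1\<^sub>m a) B (0\<^sub>m b a) (1\<^sub>m b) * four_block_mat (1\<^sub>m a) (- B) (0\<^sub>m b a) (1\<^sub>m b) = 1\<^sub>m (a + b)"
    unfolding ut_mult[OF B mB] uminus_l_inv_mat[OF B] by simp
  show "four_block_mat (1\<^sub>m a) (- B) (0\<^sub>m b a) (1\<^sub>m b) * four_block_mat (1\<^sub>m a) B (0\<^sub>m b a) (1\<^sub>m b) = 1\<^sub>m (a + b)"
    unfolding ut_mult[OF mB B] add_uminus_mat[OF B] by simp
qed

lemma swap_inv:
  shows "four_block_mat (0\<^sub>m a b) (1\<^sub>m a) (1\<^sub>m b) (0\<^sub>m b a) * four_block_mat (0\<^sub>m b a) (1\<^sub>m b) (1\<^sub>m a) (0\<^sub>m a b) = (1\<^sub>m (a + b) :: int mat)"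
proof -
  have "four_block_mat (0\<^sub>m a b) (1\<^sub>m a) (1\<^sub>m b) (0\<^sub>m b a) * four_block_mat (0\<^sub>m b a) (1\<^sub>m b) (1\<^sub>m a) (0\<^sub>m a b)
    = four_block_mat (0\<^sub>m a b * 0\<^sub>m b a + 1\<^sub>m a * 1\<^sub>m a) (0\<^sub>m a b * 1\<^sub>m b + 1\<^sub>m a * (0\<^sub>m a b :: int mat))
        (1\<^sub>m b * 0\<^sub>m b a + 0\<^sub>m b a * 1\<^sub>m a) (1\<^sub>m b * 1\<^sub>m b + 0\<^sub>m b a * 0\<^sub>m a b)"
    by (rule mult_four_block_mat) auto
  also have "\<dots> = 1\<^sub>m (a + b)"
    by (simp add: left_add_zero_mat[OF one_carrier_mat] right_add_zero_mat[OF zero_carrier_mat])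
  finally show ?thesis .
qed


lemma step_eqv:
  fixes p e :: nat
  assumes p: "prime p"
  defines "m \<equiv> p ^ e" and "s \<equiv> (p - 1) * p ^ e"
  shows "eqv (s + m) (A_mat (p ^ Suc e))
           (four_block_mat (1\<^sub>m s) (0\<^sub>m s m) (0\<^sub>m m s) (of_nat p \<cdot>\<^sub>m A_mat m))"
proof -
  have p1: "p > 1" using p prime_gt_1_nat by blast
  have Ns: "p ^ Suc e = s + m" using p1 by (simp add: m_def s_def algebra_simps)
  have ms: "m + s = s + m" by simp
  let ?A = "A_mat (p ^ Suc e)"
  let ?Am = "A_mat m"
  let ?pAm = "of_nat p \<cdot>\<^sub>m A_mat m :: int mat"
  have cA11: "A11 p e \<in> carrier_mat m s" by (simp add: A11_def m_def s_def)
  have cAm: "?Am \<in> carrier_mat m m" by (simp add: A_mat_def)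
  have cpAm: "?pAm \<in> carrier_mat m m" by (simp add: A_mat_def)
  have cC: "Cm p e \<in> carrier_mat s m" by (simp add: Cm_def m_def s_def)
  have cA22: "A22 p e \<in> carrier_mat s m" by (simp add: A22_def m_def s_def)
  have cN: "?A \<in> carrier_mat (s + m) (s + m)" using Ns by (simp add: A_mat_def)
  have Ablk: "?A = four_block_mat (A11 p e) ?Am (1\<^sub>m s) (A22 p e)"
    using A_block[OF p, of e] by (simp add: m_def s_def)
  define Q1 where "Q1 = four_block_mat (1\<^sub>m s) (Cm p e) (0\<^sub>m m s) (1\<^sub>m m)"
  define Q1' where "Q1' = four_block_mat (1\<^sub>m s) (- Cm p e) (0\<^sub>m m s) (1\<^sub>m m)"
  define P1 where "P1 = four_block_mat (1\<^sub>m m) (- A11 p e) (0\<^sub>m s m) (1\<^sub>m s)"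
  define P1' where "P1' = four_block_mat (1\<^sub>m m) (A11 p e) (0\<^sub>m s m) (1\<^sub>m s)"
  define R :: "int mat" where "R = four_block_mat (0\<^sub>m s m) (1\<^sub>m s) (1\<^sub>m m) (0\<^sub>m m s)"
  define R' :: "int mat" where "R' = four_block_mat (0\<^sub>m m s) (1\<^sub>m m) (1\<^sub>m s) (0\<^sub>m s m)"
  have cQ1: "Q1 \<in> carrier_mat (s + m) (s + m)" unfolding Q1_def by (rule four_block_carrier_mat) auto
  have cQ1': "Q1' \<in> carrier_mat (s + m) (s + m)" unfolding Q1'_def by (rule four_block_carrier_mat) auto
  have cP1: "P1 \<in> carrier_mat (s + m) (s + m)" unfolding P1_def ms[symmetric] by (rule four_block_carrier_mat) auto
  have cP1': "P1' \<in> carrier_mat (s + m) (s + m)" unfolding P1'_def ms[symmetric] by (rule four_block_carrier_mat) auto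
  have cR: "R \<in> carrier_mat (s + m) (s + m)"
  proof -
    have "R \<in> carrier_mat (s + m) (m + s)" unfolding R_def by (rule four_block_carrier_mat) auto
    then show ?thesis by (simp add: ms)
  qed
  have cR': "R' \<in> carrier_mat (s + m) (s + m)"
  proof -
    have "R' \<in> carrier_mat (m + s) (s + m)" unfolding R'_def by (rule four_block_carrier_mat) auto
    then show ?thesis by (simp add: ms)
  qed
  have iQ1: "Q1 * Q1' = 1\<^sub>m (s + m)" "Q1' * Q1 = 1\<^sub>m (s + m)"
    unfolding Q1_def Q1'_def using ut_inv[OF cC] by auto
  have iP1: "P1' * P1 = 1\<^sub>m (s + m)" "P1 * P1' = 1\<^sub>m (s + m)"
    unfolding P1_def P1'_def using ut_inv[OF cA11] ms by auto
  have iR: "R * R' = 1\<^sub>m (s + m)" "R' * R = 1\<^sub>m (s + m)"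
    unfolding R_def R'_def using swap_inv[of s m] swap_inv[of m s] ms by auto
  have AQ: "?A * Q1 = four_block_mat (A11 p e) ?pAm (1\<^sub>m s) (0\<^sub>m s m)"
  proof -
    have "?A * Q1 = four_block_mat (A11 p e * 1\<^sub>m s + ?Am * 0\<^sub>m m s) (A11 p e * Cm p e + ?Am * 1\<^sub>m m)
        (1\<^sub>m s * 1\<^sub>m s + A22 p e * 0\<^sub>m m s) (1\<^sub>m s * Cm p e + A22 p e * 1\<^sub>m m)"
      unfolding Ablk Q1_def
      by (rule mult_four_block_mat[OF cA11 cAm one_carrier_mat cA22 one_carrier_mat cC zero_carrier_mat one_carrier_mat])
    also have "\<dots> = four_block_mat (A11 p e) (A11 p e * Cm p e + ?Am) (1\<^sub>m s) (Cm p e + A22 p e)"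
      using cA11 cAm cC cA22 by (simp add: right_add_zero_mat[OF cA11] right_add_zero_mat[OF one_carrier_mat])
    also have "\<dots> = four_block_mat (A11 p e) ?pAm (1\<^sub>m s) (0\<^sub>m s m)"
      using A11C[OF p, of e] CA22[of p e] by (simp add: m_def s_def)
    finally show ?thesis .
  qed
  have PAQ: "P1 * (?A * Q1) = four_block_mat (0\<^sub>m m s) ?pAm (1\<^sub>m s) (0\<^sub>m s m)"
  proof -
    have cmA11: "- A11 p e \<in> carrier_mat m s" using cA11 by simp
    have "P1 * (?A * Q1) = four_block_mat (1\<^sub>m m * A11 p e + (- A11 p e) * 1\<^sub>m s) (1\<^sub>m m * ?pAm + (- A11 p e) * 0\<^sub>m s m)
        (0\<^sub>m s m * A11 p e + 1\<^sub>m s * 1\<^sub>m s) (0\<^sub>m s m * ?pAm + 1\<^sub>m s * 0\<^sub>m s m)"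
      unfolding AQ P1_def
      by (rule mult_four_block_mat[OF one_carrier_mat cmA11 zero_carrier_mat one_carrier_mat cA11 cpAm one_carrier_mat zero_carrier_mat])
    also have "\<dots> = four_block_mat (A11 p e + - A11 p e) ?pAm (1\<^sub>m s) (0\<^sub>m s m)"
      using cA11 cpAm by (simp add: right_add_zero_mat[OF cpAm] left_add_zero_mat)
    also have "A11 p e + - A11 p e = 0\<^sub>m m s" by (rule add_uminus_mat[OF cA11])
    finally show ?thesis .
  qed
  have RPAQ: "R * (P1 * (?A * Q1)) = four_block_mat (1\<^sub>m s) (0\<^sub>m s m) (0\<^sub>m m s) ?pAm"
  proof -
    have "R * (P1 * (?A * Q1)) = four_block_mat (0\<^sub>m s m * 0\<^sub>m m s + 1\<^sub>m s * 1\<^sub>m s) (0\<^sub>m s m * ?pAm + 1\<^sub>m s * 0\<^sub>m s m)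
        (1\<^sub>m m * 0\<^sub>m m s + 0\<^sub>m m s * 1\<^sub>m s) (1\<^sub>m m * ?pAm + 0\<^sub>m m s * 0\<^sub>m s m)"
      unfolding PAQ R_def
      by (rule mult_four_block_mat[OF zero_carrier_mat one_carrier_mat one_carrier_mat zero_carrier_mat
            zero_carrier_mat cpAm one_carrier_mat zero_carrier_mat])
    also have "\<dots> = four_block_mat (1\<^sub>m s) (0\<^sub>m s m) (0\<^sub>m m s) ?pAm"
      using cpAm by (simp add: left_add_zero_mat right_add_zero_mat[OF cpAm])
    finally show ?thesis .
  qed
  have cRP: "R * P1 \<in> carrier_mat (s + m) (s + m)" using cR cP1 by simp
  have "(R * P1) * ?A * Q1 = R * (P1 * (?A * Q1))"
  proof -
    have "(R * P1) * ?A = R * (P1 * ?A)" by (rule assoc_mult_mat[OF cR cP1 cN])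
    then have "(R * P1) * ?A * Q1 = R * (P1 * ?A) * Q1" by simp
    also have "\<dots> = R * (P1 * ?A * Q1)" by (rule assoc_mult_mat[OF cR _ cQ1]) (use cP1 cN in simp)
    also have "P1 * ?A * Q1 = P1 * (?A * Q1)" by (rule assoc_mult_mat[OF cP1 cN cQ1])
    finally show ?thesis .
  qed
  then have eq: "four_block_mat (1\<^sub>m s) (0\<^sub>m s m) (0\<^sub>m m s) ?pAm = (R * P1) * ?A * Q1" using RPAQ by simp
  have i1: "(R * P1) * (P1' * R') = 1\<^sub>m (s + m)" by (rule inv_prod) (use cR cP1 cP1' cR' iR iP1 in auto)
  have i2: "(P1' * R') * (R * P1) = 1\<^sub>m (s + m)" by (rule inv_prod) (use cR cP1 cP1' cR' iR iP1 in auto)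
  show ?thesis unfolding eqv_def
    by (rule exI[of _ "R * P1"], rule exI[of _ "P1' * R'"], rule exI[of _ Q1], rule exI[of _ Q1'])
      (use cRP cP1' cR' cQ1 cQ1' i1 i2 iQ1 eq in auto)
qed


fun dd :: "nat \<Rightarrow> nat \<Rightarrow> nat \<Rightarrow> int" where
  "dd p 0 i = 1"
| "dd p (Suc e) i = (if i < (p - 1) * p ^ e then 1 else int p * dd p e (i - (p - 1) * p ^ e))"

fun Dg :: "nat \<Rightarrow> nat \<Rightarrow> int mat" where
  "Dg p 0 = 1\<^sub>m 1"
| "Dg p (Suc e) = four_block_mat (1\<^sub>m ((p - 1) * p ^ e)) (0\<^sub>m ((p - 1) * p ^ e) (p ^ e))
      (0\<^sub>m (p ^ e) ((p - 1) * p ^ e)) (of_nat p \<cdot>\<^sub>m Dg p e)"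

lemma ppow_split: "(p::nat) > 0 \<Longrightarrow> (p - 1) * p ^ e + p ^ e = p ^ Suc e"
  by (cases p) (auto simp: algebra_simps)

lemma Dg_carrier: "p > 0 \<Longrightarrow> Dg p e \<in> carrier_mat (p ^ e) (p ^ e)"
proof (induction e)
  case 0 then show ?case by simp
next
  case (Suc e)
  have "Dg p (Suc e) \<in> carrier_mat ((p - 1) * p ^ e + p ^ e) ((p - 1) * p ^ e + p ^ e)"
    using Suc by simp
  then show ?case using ppow_split[OF Suc.prems, of e] by simp
qed

lemma Dg_entry: "p > 0 \<Longrightarrow> i < p ^ e \<Longrightarrow> j < p ^ e \<Longrightarrow> Dg p e $$ (i, j) = (if i = j then dd p e i else 0)"
proof (induction e arbitrary: i j)
  case 0 then show ?case by simp
next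
  case (Suc e)
  define s where "s = (p - 1) * p ^ e"
  have c: "Dg p e \<in> carrier_mat (p ^ e) (p ^ e)" using Dg_carrier[OF Suc.prems(1)] .
  have ij: "i < s + p ^ e" "j < s + p ^ e" using Suc.prems ppow_split[OF Suc.prems(1), of e] by (auto simp: s_def)
  have D: "Dg p (Suc e) = four_block_mat (1\<^sub>m s) (0\<^sub>m s (p ^ e)) (0\<^sub>m (p ^ e) s) (of_nat p \<cdot>\<^sub>m Dg p e)"
    by (simp add: s_def)
  have dS: "dd p (Suc e) k = (if k < s then 1 else int p * dd p e (k - s))" for k by (simp add: s_def)
  have "Dg p (Suc e) $$ (i, j) = (if i < s then if j < s then 1\<^sub>m s $$ (i, j) else 0 else
      if j < s then 0 else of_nat p * Dg p e $$ (i - s, j - s))"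
    unfolding D using ij c by simp
  also have "\<dots> = (if i = j then dd p (Suc e) i else 0)"
  proof -
    { assume "\<not> i < s" "\<not> j < s"
      then have "i - s < p ^ e" "j - s < p ^ e" using ij by auto
      then have "Dg p e $$ (i - s, j - s) = (if i - s = j - s then dd p e (i - s) else 0)"
        using Suc.IH Suc.prems(1) by blast
    }
    then show ?thesis using ij by (auto simp del: dd.simps simp: dS)
  qed
  finally show ?case .
qed

lemma dd_pos: "p > 0 \<Longrightarrow> dd p e i > 0"
  by (induction e arbitrary: i) auto

lemma dd_chain: "p > 0 \<Longrightarrow> i \<le> j \<Longrightarrow> j < p ^ e \<Longrightarrow> dd p e i dvd dd p e j"
proof (induction e arbitrary: i j)
  case 0 then show ?case by simp
next
  case (Suc e)
  define s where "s = (p - 1) * p ^ e"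
  have dS: "dd p (Suc e) k = (if k < s then 1 else int p * dd p e (k - s))" for k by (simp add: s_def)
  show ?case
  proof (cases "i < s")
    case True then show ?thesis by (simp del: dd.simps add: dS)
  next
    case False
    then have j: "\<not> j < s" using Suc.prems by simp
    have "j - s < p ^ e" using Suc.prems ppow_split[OF Suc.prems(1), of e] j by (simp add: s_def)
    then have "dd p e (i - s) dvd dd p e (j - s)" using Suc.IH Suc.prems False by simp
    then show ?thesis using False j by (simp del: dd.simps add: dS)
  qed
qed

lemma image_mset_sum': "image_mset f (\<Sum>i\<in>A. g i) = (\<Sum>i\<in>A. image_mset f (g i))"
  by (induction A rule: infinite_finite_induct) auto

lemma image_mset_rep: "image_mset f (replicate_mset n x) = replicate_mset n (f x)"
  by (induction n) auto

lemma dd_mset: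
  assumes p: "prime p"
  shows "mset (map (dd p e) [0..<p ^ e]) = (\<Sum>i\<in>{0..e}. replicate_mset (totient (p ^ (e - i))) (int p ^ i))"
proof (induction e)
  case 0 then show ?case by simp
next
  case (Suc e)
  define s where "s = (p - 1) * p ^ e"
  define m where "m = p ^ e"
  have p0: "p > 0" using p prime_gt_0_nat by blast
  have N: "p ^ Suc e = s + m" using ppow_split[OF p0, of e] by (simp add: s_def m_def)
  have "[0..<p ^ Suc e] = [0..<s] @ [s..<s + m]" unfolding N by (rule upt_add_eq_append) simp
  moreover have "[s..<s + m] = map (\<lambda>i. i + s) [0..<m]" by (simp add: map_add_upt add.commute)
  ultimately have "map (dd p (Suc e)) [0..<p ^ Suc e] = map (dd p (Suc e)) [0..<s] @ map (\<lambda>i. dd p (Suc e) (i + s)) [0..<m]"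
    by simp
  also have "map (dd p (Suc e)) [0..<s] = replicate s 1"
    by (rule nth_equalityI) (auto simp: s_def)
  also have "map (\<lambda>i. dd p (Suc e) (i + s)) [0..<m] = map (\<lambda>x. int p * x) (map (dd p e) [0..<m])"
    by (simp add: s_def)
  finally have Leq: "map (dd p (Suc e)) [0..<p ^ Suc e] = replicate s 1 @ map (\<lambda>x. int p * x) (map (dd p e) [0..<m])" .
  have L: "mset (map (dd p (Suc e)) [0..<p ^ Suc e]) = replicate_mset s 1 + image_mset (\<lambda>x. int p * x) (mset (map (dd p e) [0..<p ^ e]))"
    unfolding Leq m_def by (simp only: mset_append mset_replicate mset_map)
  have "(\<Sum>i\<in>{0..Suc e}. replicate_mset (totient (p ^ (Suc e - i))) (int p ^ i))
     = replicate_mset (totient (p ^ Suc e)) 1 + (\<Sum>i\<in>{0..e}. replicate_mset (totient (p ^ (e - i))) (int p ^ Suc i))"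
    by (subst sum.atLeast0_atMost_Suc_shift) (simp add: o_def)
  also have "totient (p ^ Suc e) = s" using totient_prime_power_Suc[OF p, of e] by (simp add: s_def mult.commute)
  also have "(\<Sum>i\<in>{0..e}. replicate_mset (totient (p ^ (e - i))) (int p ^ Suc i))
      = image_mset (\<lambda>x. int p * x) (\<Sum>i\<in>{0..e}. replicate_mset (totient (p ^ (e - i))) (int p ^ i))"
    by (simp add: image_mset_sum' image_mset_rep)
  finally have R: "(\<Sum>i\<in>{0..Suc e}. replicate_mset (totient (p ^ (Suc e - i))) (int p ^ i))
     = replicate_mset s 1 + image_mset (\<lambda>x. int p * x) (\<Sum>i\<in>{0..e}. replicate_mset (totient (p ^ (e - i))) (int p ^ i))" .
  show ?case by (simp only: L R Suc.IH)
qed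

lemma A_mat_1: "A_mat 1 = 1\<^sub>m 1"
proof (rule eq_matI)
  fix i j assume "i < dim_row (1\<^sub>m 1 :: int mat)" "j < dim_col (1\<^sub>m 1 :: int mat)"
  then have ij: "i = 0" "j = 0" by auto
  have em: "{d'. d' dvd (1::nat) \<and> d' < 1} = {}" by auto
  have off: "blk_off 1 1 = 0" unfolding blk_off_def em by simp
  have off': "blk_off (Suc 0) (Suc 0) = 0" using off by simp
  have b: "blk_of 1 0 = 1" by (rule blk_of_unique) (simp_all add: off off')
  have r: "red_mod (monom 1 0) (cyclo 1) = 1"
  proof -
    have c1: "cyclo (Suc 0) = [:-1,1:]" using cyclo_1 by simp
    show ?thesis by (rule red_mod_unique[of _ _ 0]) (simp_all add: cyclo_1 c1 monom_0)
  qed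
  show "A_mat 1 $$ (i, j) = 1\<^sub>m 1 $$ (i, j)"
    unfolding A_mat_def using ij b off r by (simp add: Let_def)
qed (simp_all add: A_mat_def)

lemma A_eqv:
  assumes p: "prime p"
  shows "eqv (p ^ e) (A_mat (p ^ e)) (Dg p e)"
proof (induction e)
  case 0 then show ?case using A_mat_1 eqv_refl[of "1\<^sub>m 1" 1] by simp
next
  case (Suc e)
  define s where "s = (p - 1) * p ^ e"
  define m where "m = p ^ e"
  have p0: "p > 0" using p prime_gt_0_nat by blast
  have N: "p ^ Suc e = s + m" using ppow_split[OF p0, of e] by (simp add: s_def m_def)
  have cA: "A_mat m \<in> carrier_mat m m" by (simp add: A_mat_def)
  have cN: "A_mat (p ^ Suc e) \<in> carrier_mat (s + m) (s + m)" using N by (simp add: A_mat_def)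
  have st: "eqv (s + m) (A_mat (p ^ Suc e)) (four_block_mat (1\<^sub>m s) (0\<^sub>m s m) (0\<^sub>m m s) (of_nat p \<cdot>\<^sub>m A_mat m))"
    using step_eqv[OF p, of e] by (simp add: s_def m_def)
  have "eqv m (of_nat p \<cdot>\<^sub>m A_mat m) (of_nat p \<cdot>\<^sub>m Dg p e)"
    by (rule eqv_smult[OF cA]) (use Suc in \<open>simp add: m_def\<close>)
  then have "eqv (s + m) (four_block_mat (1\<^sub>m s) (0\<^sub>m s m) (0\<^sub>m m s) (of_nat p \<cdot>\<^sub>m A_mat m)) (Dg p (Suc e))"
    using eqv_lift[of "of_nat p \<cdot>\<^sub>m A_mat m" m "of_nat p \<cdot>\<^sub>m Dg p e" s] cA by (simp add: s_def m_def)
  then have "eqv (s + m) (A_mat (p ^ Suc e)) (Dg p (Suc e))"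
    by (rule eqv_trans[OF cN st])
  then show ?case using N by simp
qed


lemma inv_obtain:
  fixes P :: "int mat"
  assumes P: "P \<in> carrier_mat n n" and i: "invertible_mat P"
  shows "\<exists>P'. P' \<in> carrier_mat n n \<and> P * P' = 1\<^sub>m n \<and> P' * P = 1\<^sub>m n"
proof -
  obtain B where B: "inverts_mat P B" "inverts_mat B P" using i unfolding invertible_mat_def by blast
  have dP: "dim_row P = n" "dim_col P = n" using P by auto
  have PB: "P * B = 1\<^sub>m n" using B(1) unfolding inverts_mat_def dP .
  have BP: "B * P = 1\<^sub>m (dim_row B)" using B(2) unfolding inverts_mat_def .
  have "dim_col (P * B) = n" unfolding PB by simp
  then have c: "dim_col B = n" by simp
  have e1: "dim_col (B * P) = dim_col P" by simp
  have e2: "dim_col (B * P) = dim_row B" unfolding BP by simp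
  have "dim_row B = dim_col (B * P)" using e2 by (rule sym)
  also have "\<dots> = dim_col P" by (rule e1)
  also have "\<dots> = n" by (rule dP(2))
  finally have r: "dim_row B = n" .
  have cB: "B \<in> carrier_mat n n" by (rule carrier_matI[OF r c])
  have BP': "B * P = 1\<^sub>m n" using BP unfolding r .
  show ?thesis using PB BP' cB by blast
qed

lemma chain_of_succ:
  fixes f :: "nat \<Rightarrow> int"
  assumes "\<And>i. i + 1 < n \<Longrightarrow> f i dvd f (i + 1)"
  shows "i \<le> j \<Longrightarrow> j < n \<Longrightarrow> f i dvd f j"
proof (induction j)
  case 0 then show ?case by simp
next
  case (Suc j)
  show ?case
  proof (cases "i = Suc j")
    case True then show ?thesis by simp
  next
    case False
    then have "i \<le> j" using Suc by simp
    then have "f i dvd f j" using Suc by simp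
    moreover have "f j dvd f (Suc j)" using assms[of j] Suc by simp
    ultimately show ?thesis by (rule dvd_trans)
  qed
qed

lemma prod_dvd_transfer:
  fixes D1 D2 X Y :: "int mat"
  assumes D1: "D1 \<in> carrier_mat n n" and D2: "D2 \<in> carrier_mat n n"
    and X: "X \<in> carrier_mat n n" and Y: "Y \<in> carrier_mat n n" and eq: "D2 = X * D1 * Y"
    and dg1: "\<And>i j. i < n \<Longrightarrow> j < n \<Longrightarrow> i \<noteq> j \<Longrightarrow> D1 $$ (i,j) = 0"
    and ch1: "\<And>i j. i \<le> j \<Longrightarrow> j < n \<Longrightarrow> D1 $$ (i,i) dvd D1 $$ (j,j)"
    and dg2: "\<And>i j. i < n \<Longrightarrow> j < n \<Longrightarrow> i \<noteq> j \<Longrightarrow> D2 $$ (i,j) = 0"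
    and k: "k \<le> n"
  shows "(\<Prod>i<k. D1 $$ (i,i)) dvd (\<Prod>i<k. D2 $$ (i,i))"
proof -
  let ?c = "\<Prod>i<k. D1 $$ (i,i)"
  have "mdvd ?c k D1" by (rule diag_mdvd[OF D1 dg1 ch1])
  then have "mdvd ?c k (X * D1)" by (rule mdvd_mult_left[OF X D1])
  moreover have XD: "X * D1 \<in> carrier_mat n n" by (rule mult_carrier_mat[OF X D1])
  ultimately have "mdvd ?c k (X * D1 * Y)" using mdvd_mult_right[OF XD Y] by blast
  then have "mdvd ?c k D2" using eq by simp
  then have all: "\<forall>f g. (\<forall>i<k. f i < dim_row D2) \<longrightarrow> (\<forall>i<k. g i < dim_col D2) \<longrightarrow>
     ?c dvd det (mat k k (\<lambda>(i,j). D2 $$ (f i, g j)))" unfolding mdvd_def .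
  have h: "\<forall>i<k. id i < dim_row D2" "\<forall>i<k. id i < dim_col D2" using D2 k by auto
  have "?c dvd det (mat k k (\<lambda>(i,j). D2 $$ (id i, id j)))"
    using all h by blast
  also have "det (mat k k (\<lambda>(i,j). D2 $$ (id i, id j))) = (\<Prod>i<k. D2 $$ (i,i))"
    by (rule diag_lead_minor[OF D2 k dg2])
  finally show ?thesis .
qed


lemma prod_eq_nonzero:
  fixes a b :: "nat \<Rightarrow> int"
  assumes eq: "\<And>k. k \<le> n \<Longrightarrow> (\<Prod>i<k. a i) = (\<Prod>i<k. b i)" and nz: "\<And>i. i < n \<Longrightarrow> b i \<noteq> 0"
    and i: "i < n"
  shows "a i = b i"
proof -
  have e1: "(\<Prod>i<Suc i. a i) = (\<Prod>i<Suc i. b i)" by (rule eq) (use i in simp)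
  have e0: "(\<Prod>i<i. a i) = (\<Prod>i<i. b i)" by (rule eq) (use i in simp)
  have nz0: "(\<Prod>i<i. b i) \<noteq> 0" using nz i by (simp add: prod_zero_iff)
  have "(\<Prod>i<i. b i) * a i = (\<Prod>i<i. b i) * b i"
    using e1 unfolding prod.lessThan_Suc e0 .
  then show ?thesis using nz0 by simp
qed

theorem theorem2p6:
  fixes p e :: nat
  assumes "prime p" and "e > 0"
  shows "(\<exists>D. smith_nf (A_mat (p ^ e)) D) \<and>
    (\<forall>D. smith_nf (A_mat (p ^ e)) D \<longrightarrow>
       elem_divs D = (\<Sum>i\<in>{0..e}. replicate_mset (totient (p ^ (e - i))) (int p ^ i)))"
proof -
  note p = assms(1)
  define n where "n = p ^ e"
  have p0: "p > 0" using p prime_gt_0_nat by blast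
  define M where "M = A_mat n"
  define D0 where "D0 = Dg p e"
  have cM: "M \<in> carrier_mat n n" unfolding M_def by (rule carrier_matI) simp_all
  have cD0: "D0 \<in> carrier_mat n n" unfolding D0_def n_def by (rule Dg_carrier[OF p0])
  have dM: "dim_row M = n" "dim_col M = n" unfolding M_def by simp_all
  have dD0: "dim_row D0 = n" "dim_col D0 = n" using cD0 by auto
  have D0e: "\<And>i j. i < n \<Longrightarrow> j < n \<Longrightarrow> D0 $$ (i, j) = (if i = j then dd p e i else 0)"
    unfolding D0_def n_def by (rule Dg_entry[OF p0])
  obtain P0 P0' Q0 Q0' where a: "P0 \<in> carrier_mat n n" "P0' \<in> carrier_mat n n" "Q0 \<in> carrier_mat n n" "Q0' \<in> carrier_mat n n"
    "P0 * P0' = 1\<^sub>m n" "P0' * P0 = 1\<^sub>m n" "Q0 * Q0' = 1\<^sub>m n" "Q0' * Q0 = 1\<^sub>m n" "D0 = P0 * M * Q0"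
    using A_eqv[OF p, of e] unfolding eqv_def M_def D0_def n_def by blast
  have ddp: "\<And>i. 0 < dd p e i" by (rule dd_pos[OF p0])
  have ddnz: "dd p e i \<noteq> 0" for i using ddp[of i] by simp
  have ddnn: "0 \<le> dd p e i" for i using ddp[of i] by simp
  have dg0: "\<And>i j. i < n \<Longrightarrow> j < n \<Longrightarrow> i \<noteq> j \<Longrightarrow> D0 $$ (i,j) = 0" using D0e by simp
  have ch0: "\<And>i j. i \<le> j \<Longrightarrow> j < n \<Longrightarrow> D0 $$ (i,i) dvd D0 $$ (j,j)"
  proof -
    fix i j assume ij: "i \<le> j" "j < n"
    then have "D0 $$ (i,i) = dd p e i" "D0 $$ (j,j) = dd p e j" using D0e by auto
    then show "D0 $$ (i,i) dvd D0 $$ (j,j)" using dd_chain[OF p0 ij(1)] ij(2) by (simp add: n_def)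
  qed
  have S0: "smith_nf M D0"
    unfolding smith_nf_def
  proof (intro conjI allI impI)
    show "\<exists>P Q. P \<in> carrier_mat (dim_row M) (dim_row M) \<and> Q \<in> carrier_mat (dim_col M) (dim_col M) \<and>
        invertible_mat P \<and> invertible_mat Q \<and> D0 = P * M * Q"
      unfolding dM using a eqv_invertible[OF a(1) a(2) a(5) a(6)] eqv_invertible[OF a(3) a(4) a(7) a(8)] by blast
  next
    fix i j assume "i < dim_row D0 \<and> j < dim_col D0 \<and> i \<noteq> j"
    then show "D0 $$ (i, j) = 0" using dg0 dD0 by auto
  next
    fix i assume "i < min (dim_row D0) (dim_col D0)"
    then have "i < n" using dD0 by simp
    then show "0 \<le> D0 $$ (i, i)" using D0e ddnn by simp
  next
    fix i assume "i + 1 < min (dim_row D0) (dim_col D0)"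
    then have "i + 1 < n" using dD0 by simp
    then show "D0 $$ (i, i) dvd D0 $$ (i + 1, i + 1)" using ch0[of i "i+1"] by simp
  qed
  have uniq: "elem_divs D = (\<Sum>i\<in>{0..e}. replicate_mset (totient (p ^ (e - i))) (int p ^ i))"
    if S: "smith_nf M D" for D
  proof -
    obtain P Q where b: "P \<in> carrier_mat n n" "Q \<in> carrier_mat n n" "invertible_mat P" "invertible_mat Q" "D = P * M * Q"
      using S unfolding smith_nf_def dM by blast
    have cD: "D \<in> carrier_mat n n" unfolding b(5) by (intro mult_carrier_mat[OF _ b(2)] mult_carrier_mat[OF b(1) cM])
    have dD: "dim_row D = n" "dim_col D = n" using cD by auto
    obtain P' where P': "P' \<in> carrier_mat n n" "P * P' = 1\<^sub>m n" "P' * P = 1\<^sub>m n" using inv_obtain[OF b(1) b(3)] by blast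
    obtain Q' where Q': "Q' \<in> carrier_mat n n" "Q * Q' = 1\<^sub>m n" "Q' * Q = 1\<^sub>m n" using inv_obtain[OF b(2) b(4)] by blast
    have dg: "\<And>i j. i < n \<Longrightarrow> j < n \<Longrightarrow> i \<noteq> j \<Longrightarrow> D $$ (i,j) = 0"
      using S dD unfolding smith_nf_def by auto
    have nn: "\<And>i. i < n \<Longrightarrow> 0 \<le> D $$ (i,i)"
      using S dD unfolding smith_nf_def by auto
    have sc: "\<And>i. i + 1 < n \<Longrightarrow> D $$ (i,i) dvd D $$ (i+1,i+1)"
      using S dD unfolding smith_nf_def by auto
    have ch: "\<And>i j. i \<le> j \<Longrightarrow> j < n \<Longrightarrow> D $$ (i,i) dvd D $$ (j,j)"
      using chain_of_succ[of n "\<lambda>i. D $$ (i,i)"] sc by blast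
    have M1: "M = P0' * D0 * Q0'"
    proof -
      have "P0' * D0 * Q0' = (P0' * P0) * M * (Q0 * Q0')" unfolding a(9) by (rule assoc5[OF a(2) a(1) cM a(3) a(4)])
      also have "\<dots> = M" unfolding a(6) a(7) using cM by simp
      finally show ?thesis by simp
    qed
    have M2: "M = P' * D * Q'"
    proof -
      have "P' * D * Q' = (P' * P) * M * (Q * Q')" unfolding b(5) by (rule assoc5[OF P'(1) b(1) cM b(2) Q'(1)])
      also have "\<dots> = M" unfolding P'(3) Q'(2) using cM by simp
      finally show ?thesis by simp
    qed
    have E1: "D = (P * P0') * D0 * (Q0' * Q)"
      unfolding b(5) M1 by (rule assoc5[OF b(1) a(2) cD0 a(4) b(2)])
    have E2: "D0 = (P0 * P') * D * (Q' * Q0)"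
      unfolding a(9) M2 by (rule assoc5[OF a(1) P'(1) cD Q'(1) a(3)])
    have prods: "(\<Prod>i<k. D $$ (i,i)) = (\<Prod>i<k. D0 $$ (i,i))" if k: "k \<le> n" for k
    proof (rule zdvd_antisym_nonneg)
      show "0 \<le> (\<Prod>i<k. D $$ (i,i))" using nn k by (intro prod_nonneg) auto
      show "0 \<le> (\<Prod>i<k. D0 $$ (i,i))" using D0e k by (intro prod_nonneg) (auto simp: ddnn)
      show "(\<Prod>i<k. D $$ (i,i)) dvd (\<Prod>i<k. D0 $$ (i,i))"
        by (rule prod_dvd_transfer[OF cD cD0 _ _ E2 dg ch dg0 k]) (use a P' Q' in auto)
      show "(\<Prod>i<k. D0 $$ (i,i)) dvd (\<Prod>i<k. D $$ (i,i))"
        by (rule prod_dvd_transfer[OF cD0 cD _ _ E1 dg0 ch0 dg k]) (use a b in auto)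
    qed
    have diag: "D $$ (i,i) = dd p e i" if i: "i < n" for i
    proof -
      have "D $$ (i,i) = D0 $$ (i,i)"
        by (rule prod_eq_nonzero[of n "\<lambda>i. D $$ (i,i)" "\<lambda>i. D0 $$ (i,i)", OF prods _ i])
           (use D0e ddnz in auto)
      then show ?thesis using D0e i by simp
    qed
    have "elem_divs D = mset (map (\<lambda>i. D $$ (i, i)) [0..<n])" unfolding elem_divs_def dD by simp
    also have "map (\<lambda>i. D $$ (i, i)) [0..<n] = map (dd p e) [0..<n]"
      by (rule map_cong[OF refl]) (simp add: diag)
    also have "mset (map (dd p e) [0..<n]) = (\<Sum>i\<in>{0..e}. replicate_mset (totient (p ^ (e - i))) (int p ^ i))"
      unfolding n_def by (rule dd_mset[OF p])
    finally show ?thesis .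
  qed
  show ?thesis using S0 uniq unfolding M_def n_def by blast
qed

end
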